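(* Let $(\Omega,\mu)$ be a probability space and $T:\Omega\to\Omega$ an ergodic measure-preserving map. Let $a:\mathbb{N}\times\Omega\to\mathbb{R}$ be a measurable function with $a(0,\omega)\equiv 0$ such that $a(n+m,\omega)\leq a(n,\omega)+a(m,T^n\omega)$ for all integers $n,m>0$ and a.e. $\omega$, and such that $\omega\mapsto a(1,\omega)$ is integrable. Let $A=\inf_n \frac{1}{n}\int_\Omega a(n,\omega)\,d\mu$ and assume $A$ is finite. Then for almost every $\omega$ there are integers $n_i=n_i(\omega)\to\infty$ and positive real numbers $\delta_\ell=\delta_\ell(\omega)\to 0$ such that for every $i$ and every $\ell\leq n_i$, $$\left|a(n_i,\omega)-a(n_i-\ell,T^\ell\omega)-A\ell\right|\leq \ell\,\delta_\ell(\omega).$$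
   Context: A function $a$ as in the claim is called an integrable subadditive cocycle; $A$ is its asymptotic average. *)

theory Defs
  imports "HOL-Probability.Probability"
begin

definition mpt :: "'a measure \<Rightarrow> ('a \<Rightarrow> 'a) \<Rightarrow> bool" where
  "mpt M T \<longleftrightarrow> T \<in> measurable M M \<and>
     (\<forall>B\<in>sets M. emeasure M (T -` B \<inter> space M) = emeasure M B)"

definition ergodic_mpt :: "'a measure \<Rightarrow> ('a \<Rightarrow> 'a) \<Rightarrow> bool" where
  "ergodic_mpt M T \<longleftrightarrow> mpt M T \<and>
     (\<forall>B\<in>sets M. T -` B \<inter> space M = B \<longrightarrow> measure M B = 0 \<or> measure M B = 1)"

text \<open>Extended-valued Lebesgue integral: integral of positive part minus integral of
  negative part (in the extended reals), as used for possibly non-integrable functions.\<close>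
definition ext_integral :: "'a measure \<Rightarrow> ('a \<Rightarrow> real) \<Rightarrow> ereal" where
  "ext_integral M f =
     enn2ereal (\<integral>\<^sup>+ x. ennreal (f x) \<partial>M) - enn2ereal (\<integral>\<^sup>+ x. ennreal (- f x) \<partial>M)"

end

theory Submission
  imports Defs
begin

locale ergsys = prob_space M for M :: "'a measure" +
  fixes T :: "'a \<Rightarrow> 'a"
  assumes erg: "ergodic_mpt M T"
begin

lemma T_meas[measurable]: "T \<in> M \<rightarrow>\<^sub>M M"
  using erg unfolding ergodic_mpt_def mpt_def by auto

lemma Tn_meas[measurable]: "(T ^^ n) \<in> M \<rightarrow>\<^sub>M M"
proof (induction n)
  case 0 then show ?case by simp
next
  case (Suc n)
  have "(T ^^ Suc n) = T o (T ^^ n)" by simp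
  then show ?case using Suc T_meas by (metis measurable_comp)
qed
lemma Tn_space[simp]: "x \<in> space M \<Longrightarrow> (T ^^ n) x \<in> space M"
  by (rule measurable_space[OF Tn_meas])

lemma distr_T: "distr M M T = M"
proof (rule measure_eqI)
  fix B assume "B \<in> sets (distr M M T)"
  then have B: "B \<in> sets M" by simp
  then show "emeasure (distr M M T) B = emeasure M B"
    using erg unfolding ergodic_mpt_def mpt_def by (simp add: emeasure_distr)
qed simp

lemma distr_Tn: "distr M M (T ^^ n) = M"
proof (induction n)
  case 0
  then show ?case by simp
next
  case (Suc n)
  have "distr M M (T ^^ Suc n) = distr (distr M M (T ^^ n)) M T"
    by (simp add: distr_distr)
  also have "\<dots> = M" using Suc distr_T by simp
  finally show ?case .
qed

lemma AE_Tn: "AE x in M. P x \<Longrightarrow> AE x in M. P ((T ^^ n) x)"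
  using AE_distrD[OF Tn_meas, of P n] distr_Tn by metis

lemma measure_Tn: "B \<in> sets M \<Longrightarrow> measure M ((T ^^ n) -` B \<inter> space M) = measure M B"
  by (metis Tn_meas distr_Tn measure_distr)

lemma integral_Tn:
  fixes g :: "'a \<Rightarrow> real"
  assumes "g \<in> borel_measurable M"
  shows "integral\<^sup>L M (\<lambda>x. g ((T ^^ n) x)) = integral\<^sup>L M g"
  by (metis assms Tn_meas distr_Tn integral_distr)

lemma integrable_Tn:
  fixes g :: "'a \<Rightarrow> real"
  assumes "integrable M g"
  shows "integrable M (\<lambda>x. g ((T ^^ n) x))"
proof -
  have "g \<in> borel_measurable M" using assms by auto
  then show ?thesis using assms integrable_distr_eq[OF Tn_meas, of g n] by (simp add: distr_Tn)
qed

lemma funpow_T: "(T ^^ n) ((T ^^ m) x) = (T ^^ (n + m)) x"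
  by (simp add: funpow_add)

lemma ergodic_AE_inv:
  assumes B: "B \<in> sets M" and inv: "AE x in M. T x \<in> B \<longrightarrow> x \<in> B"
  shows "measure M B = 0 \<or> measure M B = 1"
proof -
  define P where "P n = (T ^^ n) -` B \<inter> space M" for n
  have Ps[measurable]: "P n \<in> sets M" for n unfolding P_def using B by measurable
  have mP: "measure M (P n) = measure M B" for n unfolding P_def using measure_Tn[OF B] .
  have step: "AE x in M. x \<in> P (Suc n) \<longleftrightarrow> x \<in> P n" for n
  proof -
    have i1: "AE x in M. x \<in> P (Suc n) \<longrightarrow> x \<in> P n"
      using AE_Tn[OF inv, of n] by eventually_elim (auto simp: P_def)
    then have "AE x in M. x \<in> P (Suc n) \<inter> P n \<longleftrightarrow> x \<in> P (Suc n)" by auto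
    then have "measure M (P (Suc n) \<inter> P n) = measure M (P (Suc n))"
      by (intro measure_eq_AE) auto
    then have "measure M (P n - P (Suc n)) = 0"
      using mP finite_measure_Diff'[of "P n" "P (Suc n)"] by (simp add: Int_commute)
    then have "AE x in M. x \<notin> P n - P (Suc n)"
      by (intro AE_not_in) (auto simp: measure_eq_0_null_sets emeasure_eq_measure)
    with i1 show ?thesis by eventually_elim auto
  qed
  have "AE x in M. x \<in> P n \<longleftrightarrow> x \<in> B" for n
  proof (induction n)
    case 0
    then show ?case by (auto simp: P_def intro!: AE_I2)
  next
    case (Suc n)
    with step[of n] show ?case by eventually_elim auto
  qed
  then have all: "AE x in M. \<forall>n. x \<in> P n \<longleftrightarrow> x \<in> B"
    by (simp add: AE_all_countable)
  define C where "C = {x \<in> space M. \<forall>m. \<exists>n\<ge>m. x \<in> P n}"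
  have Cs: "C \<in> sets M" unfolding C_def by measurable
  have "AE x in M. x \<in> C \<longleftrightarrow> x \<in> B"
    using all by eventually_elim (auto simp: C_def P_def)
  then have mC: "measure M C = measure M B" using Cs B by (intro measure_eq_AE) auto
  have "T -` C \<inter> space M = C"
  proof -
    have "x \<in> P (Suc n) \<longleftrightarrow> T x \<in> P n" if "x \<in> space M" for x n
      using that measurable_space[OF T_meas that] by (auto simp: P_def funpow_swap1)
    note PS = this
    have "T x \<in> C \<longleftrightarrow> x \<in> C" if x: "x \<in> space M" for x
    proof
      assume "T x \<in> C"
      then have h: "\<forall>m. \<exists>n\<ge>m. T x \<in> P n" by (simp add: C_def)
      have "\<exists>n\<ge>m. x \<in> P n" for m
      proof -
        obtain n where "n \<ge> m" "T x \<in> P n" using h by blast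
        then show ?thesis using PS[OF x, of n] by (intro exI[of _ "Suc n"]) auto
      qed
      then show "x \<in> C" using x by (simp add: C_def)
    next
      assume "x \<in> C"
      then have h: "\<forall>m. \<exists>n\<ge>m. x \<in> P n" by (simp add: C_def)
      have "\<exists>n\<ge>m. T x \<in> P n" for m
      proof -
        obtain n where n: "n \<ge> Suc m" "x \<in> P n" using h by blast
        then obtain n' where "n = Suc n'" by (cases n) auto
        then show ?thesis using PS[OF x, of n'] n by (intro exI[of _ n']) auto
      qed
      then show "T x \<in> C" using measurable_space[OF T_meas x] by (simp add: C_def)
    qed
    moreover have "C \<subseteq> space M" by (auto simp: C_def)
    ultimately show ?thesis by blast
  qed
  then have "measure M C = 0 \<or> measure M C = 1"
    using erg Cs unfolding ergodic_mpt_def by auto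
  then show ?thesis using mC by simp
qed

end

lemma chain:
  fixes D h :: "nat \<Rightarrow> real"
  assumes "u0 \<le> N" "u0 \<in> R"
    and mv: "\<And>u. u \<in> R \<Longrightarrow> u0 \<le> u \<Longrightarrow> u < N \<Longrightarrow>
      \<exists>u'. u < u' \<and> u' \<le> N \<and> (u' < N \<longrightarrow> u' \<in> R) \<and> D u - D u' \<le> (\<Sum>v\<in>{u..<u'}. h v)"
  shows "D u0 - D N \<le> (\<Sum>v\<in>{u0..<N}. h v)"
proof -
  have "\<forall>u. N - u = d \<longrightarrow> u \<in> R \<longrightarrow> u0 \<le> u \<longrightarrow> u \<le> N \<longrightarrow> D u - D N \<le> (\<Sum>v\<in>{u..<N}. h v)" for d
  proof (induction d rule: less_induct)
    case (less d)
    show ?case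
    proof (intro allI impI)
      fix u assume d: "N - u = d" and uR: "u \<in> R" and u0: "u0 \<le> u" and uN: "u \<le> N"
      show "D u - D N \<le> (\<Sum>v\<in>{u..<N}. h v)"
      proof (cases "u = N")
        case True then show ?thesis by simp
      next
        case False
        then have "u < N" using uN by simp
        from mv[OF uR u0 this] obtain u' where u': "u < u'" "u' \<le> N" "u' < N \<longrightarrow> u' \<in> R"
          "D u - D u' \<le> (\<Sum>v\<in>{u..<u'}. h v)" by blast
        have IH: "D u' - D N \<le> (\<Sum>v\<in>{u'..<N}. h v)"
        proof (cases "u' = N")
          case True then show ?thesis by simp
        next
          case False
          then show ?thesis using less.IH[of "N - u'"] u' d u0 by auto
        qed
        have "(\<Sum>v\<in>{u..<N}. h v) = (\<Sum>v\<in>{u..<u'}. h v) + (\<Sum>v\<in>{u'..<N}. h v)"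
          using u' by (simp add: sum.atLeastLessThan_concat)
        then show ?thesis using IH u'(4) by linarith
      qed
    qed
  qed
  from this[of "N - u0", rule_format, OF refl assms(2) order_refl assms(1)] show ?thesis .
qed

locale subcoc = ergsys +
  fixes c :: "nat \<Rightarrow> 'a \<Rightarrow> real"
  assumes c_meas[measurable]: "\<And>n. c n \<in> borel_measurable M"
    and c0: "\<And>x. x \<in> space M \<Longrightarrow> c 0 x = 0"
    and csub: "\<And>n m. n > 0 \<Longrightarrow> m > 0 \<Longrightarrow> AE x in M. c (n + m) x \<le> c n x + c m ((T ^^ n) x)"
    and cint: "integrable M (c 1)"
    and cE: "\<And>N F. integrable M F \<Longrightarrow> AE x in M. c N x \<le> F x \<Longrightarrow> 0 \<le> integral\<^sup>L M F"
begin

definition good :: "'a set" where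
  "good = {x \<in> space M. \<forall>u n m. c (n + m) ((T ^^ u) x) \<le> c n ((T ^^ u) x) + c m ((T ^^ (n + u)) x)}"

lemma AE_good: "AE x in M. x \<in> good"
proof -
  have "AE x in M. c (n + m) ((T ^^ u) x) \<le> c n ((T ^^ u) x) + c m ((T ^^ (n + u)) x)" for u n m
  proof (cases "n = 0 \<or> m = 0")
    case True
    then show ?thesis by (auto intro!: AE_I2 simp: c0)
  next
    case False
    then show ?thesis using AE_Tn[OF csub[of n m], of u] by (simp add: funpow_T)
  qed
  then have "AE x in M. \<forall>u n m. c (n + m) ((T ^^ u) x) \<le> c n ((T ^^ u) x) + c m ((T ^^ (n + u)) x)"
    by (simp add: AE_all_countable)
  then show ?thesis by (auto simp: good_def)
qed

lemma good_space: "x \<in> good \<Longrightarrow> x \<in> space M" by (simp add: good_def)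

lemma good_sub: "x \<in> good \<Longrightarrow> c (n + m) ((T ^^ u) x) \<le> c n ((T ^^ u) x) + c m ((T ^^ (n + u)) x)"
  by (simp add: good_def)

lemma good_D:
  assumes "x \<in> good" "u \<le> u'" "u' \<le> N"
  shows "c (N - u) ((T ^^ u) x) \<le> c (u' - u) ((T ^^ u) x) + c (N - u') ((T ^^ u') x)"
  using good_sub[OF assms(1), of "u' - u" "N - u'" u] assms(2,3) by simp

lemma good_unit:
  assumes "x \<in> good"
  shows "c n ((T ^^ u) x) \<le> (\<Sum>v\<in>{u..<u+n}. c 1 ((T ^^ v) x))"
proof (induction n arbitrary: u)
  case 0 then show ?case using assms good_space by (simp add: c0)
next
  case (Suc n)
  have "c (Suc n) ((T ^^ u) x) \<le> c 1 ((T ^^ u) x) + c n ((T ^^ (Suc u)) x)"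
    using good_sub[OF assms, of 1 n u] by simp
  also have "\<dots> \<le> c 1 ((T ^^ u) x) + (\<Sum>v\<in>{Suc u..<Suc u+n}. c 1 ((T ^^ v) x))"
    using Suc[of "Suc u"] by simp
  also have "\<dots> = (\<Sum>v\<in>{u..<u + Suc n}. c 1 ((T ^^ v) x))"
    by (simp add: sum.atLeast_Suc_lessThan)
  finally show ?case .
qed

end

context subcoc begin

definition fpos :: "'a \<Rightarrow> real" where "fpos x = max 0 (c 1 x)"

lemma fpos_int: "integrable M fpos"
  unfolding fpos_def by (intro integrable_max cint) simp

lemma fpos_meas[measurable]: "fpos \<in> borel_measurable M"
  using fpos_int by auto

lemma fpos_nn: "0 \<le> fpos x" by (simp add: fpos_def)

lemma c1_fpos: "c 1 x \<le> fpos x" by (simp add: fpos_def)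

lemma sum_tail_bound:
  fixes C :: real
  assumes "K \<le> N" "0 \<le> C"
  shows "(\<Sum>v<N. if N < v + K then C else 0) \<le> real K * C"
proof -
  have "(\<Sum>v<N. if N < v + K then C else 0) =
      (\<Sum>v\<in>{..<N-K}. if N < v + K then C else 0) + (\<Sum>v\<in>{N-K..<N}. if N < v + K then C else 0)"
    using sum.atLeastLessThan_concat[of 0 "N-K" N "\<lambda>v. if N < v + K then C else 0"] assms
    by (simp add: atLeast0LessThan)
  also have "(\<Sum>v\<in>{..<N-K}. if N < v + K then C else 0) = 0"
    by (intro sum.neutral) auto
  also have "(\<Sum>v\<in>{N-K..<N}. if N < v + K then C else 0) \<le> real (card {N-K..<N}) * C"
    by (intro sum_bounded_above) (use assms in auto)
  also have "card {N-K..<N} = K" using assms by simp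
  finally show ?thesis by simp
qed

lemma liminf_main:
  assumes eta: "\<eta> > 0" and freq: "AE x in M. \<forall>m. \<exists>n\<ge>m. c n x < - \<eta> * real n"
  shows False
proof -
  define G where "G K = {x \<in> space M. \<exists>k\<in>{1..K}. c k x < - \<eta> * real k}" for K
  have G_sets[measurable]: "G K \<in> sets M" for K unfolding G_def by measurable
  define g where "g K x = (indicator (space M - G K) x :: real)" for K x
  have g_meas[measurable]: "g K \<in> borel_measurable M" for K unfolding g_def by measurable
  have g01: "0 \<le> g K x" "g K x \<le> 1" for K x by (auto simp: g_def indicator_def)
  have conv: "AE x in M. (\<lambda>K. g K x) \<longlonglongrightarrow> 0"
    using freq
  proof eventually_elim
    case (elim x)
    show ?case
    proof (cases "x \<in> space M")
      case False then show ?thesis by (simp add: g_def)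
    next
      case True
      obtain n where n: "n \<ge> 1" "c n x < - \<eta> * real n" using elim by blast
      have "eventually (\<lambda>K. g K x = 0) sequentially"
        unfolding eventually_sequentially
        using n True by (intro exI[of _ n]) (force simp: g_def G_def indicator_def)
      then show ?thesis by (rule tendsto_eventually)
    qed
  qed
  have lim1: "(\<lambda>K. integral\<^sup>L M (g K)) \<longlonglongrightarrow> 0"
  proof -
    have "(\<lambda>K. integral\<^sup>L M (g K)) \<longlonglongrightarrow> integral\<^sup>L M (\<lambda>x. 0)"
      by (rule integral_dominated_convergence[where w="\<lambda>x. 1"])
         (use conv g01 in auto)
    then show ?thesis by simp
  qed
  have lim2: "(\<lambda>K. integral\<^sup>L M (\<lambda>x. fpos x * g K x)) \<longlonglongrightarrow> 0"
  proof -
    have "(\<lambda>K. integral\<^sup>L M (\<lambda>x. fpos x * g K x)) \<longlonglongrightarrow> integral\<^sup>L M (\<lambda>x. 0)"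
    proof (rule integral_dominated_convergence[where w="fpos"])
      show "AE x in M. (\<lambda>K. fpos x * g K x) \<longlonglongrightarrow> 0"
        using conv by eventually_elim (auto intro: tendsto_mult_right_zero)
      show "AE x in M. norm (fpos x * g K x) \<le> fpos x" for K
        using g01 fpos_nn by (intro AE_I2) (auto simp: abs_mult intro: mult_left_le)
    qed (auto simp: fpos_int)
    then show ?thesis by simp
  qed
  have "eventually (\<lambda>K. integral\<^sup>L M (g K) < 1/4) sequentially"
    using lim1 by (rule order_tendstoD) simp
  moreover have "eventually (\<lambda>K. integral\<^sup>L M (\<lambda>x. fpos x * g K x) < \<eta>/4) sequentially"
    using lim2 by (rule order_tendstoD) (simp add: eta)
  moreover have "eventually (\<lambda>K. K \<ge> 1) sequentially" by (rule eventually_ge_at_top)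
  ultimately have "eventually (\<lambda>K. integral\<^sup>L M (g K) < 1/4 \<and> integral\<^sup>L M (\<lambda>x. fpos x * g K x) < \<eta>/4 \<and> K \<ge> 1) sequentially"
    by eventually_elim auto
  then obtain K0 where "\<forall>K\<ge>K0. integral\<^sup>L M (g K) < 1/4 \<and> integral\<^sup>L M (\<lambda>x. fpos x * g K x) < \<eta>/4 \<and> K \<ge> 1"
    unfolding eventually_sequentially by blast
  then obtain K where K: "integral\<^sup>L M (g K) < 1/4" "integral\<^sup>L M (\<lambda>x. fpos x * g K x) < \<eta>/4" "K \<ge> 1"
    by blast
  define If where "If = integral\<^sup>L M fpos"
  have If_nn: "0 \<le> If" unfolding If_def by (intro integral_nonneg_AE) (simp add: fpos_nn)
  define N where "N = K + nat \<lceil>4 * real K * (If + \<eta>) / \<eta>\<rceil> + 1"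
  have KN: "K \<le> N" by (simp add: N_def)
  have Nbig: "real K * (If + \<eta>) < \<eta> * real N / 4"
  proof -
    have "4 * real K * (If + \<eta>) / \<eta> < real N" unfolding N_def by linarith
    then have "4 * real K * (If + \<eta>) < real N * \<eta>" using eta by (simp add: field_simps)
    then show ?thesis by (simp add: algebra_simps)
  qed
  define hh where "hh v y = - \<eta> + (\<eta> + fpos y) * g K y + (if N < v + K then fpos y + \<eta> else 0)" for v y
  define h where "h v x = hh v ((T ^^ v) x)" for v x
  have hh_ge: "- \<eta> \<le> hh v y" for v y
    using fpos_nn[of y] g01[of K y] eta unfolding hh_def
    by (auto intro!: add_nonneg_nonneg mult_nonneg_nonneg)
  have pw: "c N x \<le> (\<Sum>v<N. h v x)" if x: "x \<in> good" for x
  proof -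
    define D where "D u = c (N - u) ((T ^^ u) x)" for u
    have xs: "x \<in> space M" using x good_space by blast
    have "D 0 - D N \<le> (\<Sum>v\<in>{0..<N}. h v x)"
    proof (rule chain[where R=UNIV])
      fix u assume u: "u < N"
      show "\<exists>u'>u. u' \<le> N \<and> (u' < N \<longrightarrow> u' \<in> UNIV) \<and> D u - D u' \<le> (\<Sum>v\<in>{u..<u'}. h v x)"
      proof (cases "(T ^^ u) x \<in> G K \<and> u + K \<le> N")
        case True
        then obtain k where k: "k \<in> {1..K}" "c k ((T ^^ u) x) < - \<eta> * real k"
          by (auto simp: G_def)
        have "D u \<le> c k ((T ^^ u) x) + D (u + k)"
          using good_D[OF x, of u "u + k" N] k True by (simp add: D_def)
        moreover have "- \<eta> * real k \<le> (\<Sum>v\<in>{u..<u+k}. h v x)"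
        proof -
          have "(\<Sum>v\<in>{u..<u+k}. h v x) \<ge> (\<Sum>v\<in>{u..<u+k}. - \<eta>)"
            by (intro sum_mono) (simp add: h_def hh_ge)
          then show ?thesis by (simp add: mult.commute)
        qed
        ultimately show ?thesis using k True
          by (intro exI[of _ "u + k"]) auto
      next
        case False
        have "D u \<le> c 1 ((T ^^ u) x) + D (u + 1)"
          using good_D[OF x, of u "u + 1" N] u by (simp add: D_def)
        moreover have "c 1 ((T ^^ u) x) \<le> h u x"
        proof -
          have sp: "(T ^^ u) x \<in> space M" using xs by simp
          have "fpos ((T ^^ u) x) \<le> hh u ((T ^^ u) x)"
            using False sp fpos_nn[of "(T ^^ u) x"] g01[of K "(T ^^ u) x"] eta
            by (auto simp: hh_def g_def)
          then show ?thesis using c1_fpos[of "(T ^^ u) x"] by (simp add: h_def)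
        qed
        ultimately show ?thesis using u
          by (intro exI[of _ "u + 1"]) auto
      qed
    qed auto
    moreover have "D 0 = c N x" by (simp add: D_def)
    moreover have "D N = 0" by (simp add: D_def c0 xs)
    ultimately show ?thesis by (simp add: atLeast0LessThan)
  qed
  have gK_int: "integrable M (g K)"
    unfolding g_def by (intro integrable_real_indicator) (auto simp: emeasure_eq_measure)
  have fg_int: "integrable M (\<lambda>x. fpos x * g K x)"
    unfolding g_def by (intro integrable_real_mult_indicator fpos_int) auto
  have t_int: "integrable M (\<lambda>y. if N < v + K then fpos y + \<eta> else 0)" for v
    using fpos_int by (cases "N < v + K") auto
  have I1: "integral\<^sup>L M (\<lambda>y. (\<eta> + fpos y) * g K y) = \<eta> * integral\<^sup>L M (g K) + integral\<^sup>L M (\<lambda>x. fpos x * g K x)"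
  proof -
    have "(\<lambda>y. (\<eta> + fpos y) * g K y) = (\<lambda>y. \<eta> * g K y + fpos y * g K y)"
      by (simp add: distrib_right)
    then show ?thesis using gK_int fg_int by simp
  qed
  have It: "integral\<^sup>L M (\<lambda>y. if N < v + K then fpos y + \<eta> else 0) = (if N < v + K then If + \<eta> else 0)" for v
    using fpos_int by (cases "N < v + K") (auto simp: If_def prob_space)
  have hh_int: "integrable M (hh v)" for v
    unfolding hh_def using gK_int fg_int t_int[of v]
    by (intro Bochner_Integration.integrable_add) (auto simp: distrib_right)
  have Ihh: "integral\<^sup>L M (hh v) = - \<eta> + (\<eta> * integral\<^sup>L M (g K) + integral\<^sup>L M (\<lambda>x. fpos x * g K x))
      + (if N < v + K then If + \<eta> else 0)" for v
  proof -
    have "integral\<^sup>L M (hh v) = integral\<^sup>L M (\<lambda>y. - \<eta> + (\<eta> + fpos y) * g K y) +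
         integral\<^sup>L M (\<lambda>y. if N < v + K then fpos y + \<eta> else 0)"
      unfolding hh_def using gK_int fg_int t_int[of v]
      by (intro Bochner_Integration.integral_add) (auto simp: distrib_right)
    also have "integral\<^sup>L M (\<lambda>y. - \<eta> + (\<eta> + fpos y) * g K y) = - \<eta> + integral\<^sup>L M (\<lambda>y. (\<eta> + fpos y) * g K y)"
      using gK_int fg_int
      by (subst Bochner_Integration.integral_add) (auto simp: distrib_right prob_space)
    finally show ?thesis using I1 It by simp
  qed
  have hh_meas[measurable]: "hh v \<in> borel_measurable M" for v using hh_int by auto
  have h_int: "integrable M (h v)" for v unfolding h_def by (intro integrable_Tn hh_int)
  have Ih: "integral\<^sup>L M (h v) = integral\<^sup>L M (hh v)" for v
    unfolding h_def by (rule integral_Tn) simp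
  define F where "F x = (\<Sum>v<N. h v x)" for x
  have F_int: "integrable M F" unfolding F_def using h_int by auto
  have "0 \<le> integral\<^sup>L M F"
    by (rule cE[OF F_int]) (use AE_good pw in \<open>auto simp: F_def\<close>)
  also have "integral\<^sup>L M F = (\<Sum>v<N. integral\<^sup>L M (hh v))"
    unfolding F_def using h_int Ih by (simp add: Bochner_Integration.integral_sum)
  also have "\<dots> = (\<Sum>v<N. - \<eta> + (\<eta> * integral\<^sup>L M (g K) + integral\<^sup>L M (\<lambda>x. fpos x * g K x)))
       + (\<Sum>v<N. if N < v + K then If + \<eta> else 0)"
    by (simp add: Ihh sum.distrib)
  also have "\<dots> \<le> real N * (- \<eta> + (\<eta> * (1/4) + \<eta>/4)) + real K * (If + \<eta>)"
  proof -
    have "\<eta> * integral\<^sup>L M (g K) \<le> \<eta> * (1/4)" using K eta by simp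
    then have "(\<Sum>v<N. - \<eta> + (\<eta> * integral\<^sup>L M (g K) + integral\<^sup>L M (\<lambda>x. fpos x * g K x)))
       \<le> real N * (- \<eta> + (\<eta> * (1/4) + \<eta>/4))"
    proof -
      have "- \<eta> + (\<eta> * integral\<^sup>L M (g K) + integral\<^sup>L M (\<lambda>x. fpos x * g K x)) \<le> - \<eta> + (\<eta> * (1/4) + \<eta>/4)"
        using K \<open>\<eta> * integral\<^sup>L M (g K) \<le> \<eta> * (1/4)\<close> by linarith
      from mult_left_mono[OF this, of "real N"] show ?thesis by simp
    qed
    moreover have "(\<Sum>v<N. if N < v + K then If + \<eta> else 0) \<le> real K * (If + \<eta>)"
      by (rule sum_tail_bound) (use KN If_nn eta in auto)
    ultimately show ?thesis by linarith
  qed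
  finally have "0 \<le> real N * (- \<eta> / 2) + real K * (If + \<eta>)" by simp
  moreover have "0 \<le> real K * (If + \<eta>)" using If_nn eta by simp
  moreover have "real K * (If + \<eta>) < real N * \<eta> / 4" using Nbig by (simp add: mult.commute)
  ultimately show False by linarith
qed

lemma liminf_q:
  fixes q :: nat
  shows "AE x in M. \<forall>p::nat. \<exists>m. \<forall>n\<ge>m. - (1/(real q+1) + 1/(real p+1)) * real n \<le> c n x"
proof -
  define \<eta> where "\<eta> = 1/(real q+1)"
  have eta: "\<eta> > 0" by (simp add: \<eta>_def)
  define S where "S = {x \<in> space M. \<exists>p::nat. \<forall>m. \<exists>n\<ge>m. c n x < - (\<eta> + 1/(real p+1)) * real n}"
  have S_sets[measurable]: "S \<in> sets M" unfolding S_def by measurable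
  have inv: "AE x in M. T x \<in> S \<longrightarrow> x \<in> S"
    using AE_good
  proof eventually_elim
    case (elim x)
    show ?case
    proof
      assume "T x \<in> S"
      then obtain p where p: "\<forall>m. \<exists>n\<ge>m. c n (T x) < - (\<eta> + 1/(real p+1)) * real n"
        by (auto simp: S_def)
      define a where "a = 1/(real p+1)"
      have a: "a > 0" "a * (2 * real p + 2) = 2" by (auto simp: a_def field_simps)
      have ap: "1/(real (2*p+1)+1) = a/2" by (simp add: a_def field_simps)
      have "\<exists>n\<ge>m. c n x < - (\<eta> + 1/(real (2*p+1)+1)) * real n" for m
      proof -
        define m' where "m' = max m (nat \<lceil>(2 * real p + 2) * (\<bar>c 1 x\<bar> + \<eta>) + 1\<rceil>)"
        obtain n where n: "n \<ge> m'" "c n (T x) < - (\<eta> + a) * real n" using p a_def by blast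
        have nb: "real n \<ge> (2 * real p + 2) * (\<bar>c 1 x\<bar> + \<eta>) + 1"
          using n(1) unfolding m'_def by linarith
        have an: "a * real n \<ge> 2 * (\<bar>c 1 x\<bar> + \<eta>) + a"
        proof -
          have "a * real n \<ge> a * ((2 * real p + 2) * (\<bar>c 1 x\<bar> + \<eta>) + 1)"
            using nb a by (intro mult_left_mono) auto
          also have "a * ((2 * real p + 2) * (\<bar>c 1 x\<bar> + \<eta>) + 1) = 2 * (\<bar>c 1 x\<bar> + \<eta>) + a"
          proof -
            have "a * ((2 * real p + 2) * (\<bar>c 1 x\<bar> + \<eta>) + 1) = (a * (2 * real p + 2)) * (\<bar>c 1 x\<bar> + \<eta>) + a"
              by (simp add: algebra_simps)
            then show ?thesis using a(2) by simp
          qed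
          finally show ?thesis .
        qed
        have sub: "c (1 + n) x \<le> c 1 x + c n (T x)"
          using good_sub[OF elim, of 1 n 0] by simp
        have e1: "- (\<eta> + a) * real n = - (\<eta> * real n) - a * real n" by (simp add: algebra_simps)
        have e2: "- (\<eta> + a/2) * real (1 + n) = - (\<eta> * real n) - \<eta> - a * real n / 2 - a / 2"
          by (simp add: algebra_simps)
        have n2: "c n (T x) < - (\<eta> * real n) - a * real n" using n(2) e1 by simp
        have "c (1 + n) x < - (\<eta> * real n) - \<eta> - a * real n / 2 - a / 2"
          using sub n2 an abs_ge_self[of "c 1 x"] by argo
        then have "c (1 + n) x < - (\<eta> + a/2) * real (1 + n)" by (subst e2)
        then have "c (1 + n) x < - (\<eta> + 1/(real (2*p+1)+1)) * real (1 + n)" by (simp only: ap)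
        moreover have "1 + n \<ge> m" using n(1) unfolding m'_def by simp
        ultimately show ?thesis by blast
      qed
      then have "\<exists>p'::nat. \<forall>m. \<exists>n\<ge>m. c n x < - (\<eta> + 1/(real p'+1)) * real n" by blast
      then show "x \<in> S" using good_space[OF elim] unfolding S_def by blast
    qed
  qed
  have "measure M S = 0"
  proof (rule ccontr)
    assume "measure M S \<noteq> 0"
    then have "measure M S = 1" using ergodic_AE_inv[OF S_sets inv] by simp
    then have "AE x in M. x \<in> S" by (intro AE_prob_1) auto
    then have "AE x in M. \<forall>m. \<exists>n\<ge>m. c n x < - \<eta> * real n"
    proof eventually_elim
      case (elim x)
      then obtain p where p: "\<forall>m. \<exists>n\<ge>m. c n x < - (\<eta> + 1/(real p+1)) * real n"
        by (auto simp: S_def)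
      show ?case
      proof
        fix m
        obtain n where "n \<ge> m" "c n x < - (\<eta> + 1/(real p+1)) * real n" using p by blast
        moreover have "- (\<eta> + 1/(real p+1)) * real n \<le> - \<eta> * real n"
        proof -
          have "0 \<le> 1/(real p+1) * real n" by simp
          then show ?thesis by (simp add: algebra_simps)
        qed
        ultimately show "\<exists>n\<ge>m. c n x < - \<eta> * real n" by (intro exI[of _ n]) auto
      qed
    qed
    then show False using liminf_main[OF eta] by blast
  qed
  then have "AE x in M. x \<notin> S"
    by (intro AE_not_in) (auto simp: emeasure_eq_measure null_sets_def)
  with AE_space show ?thesis
  proof eventually_elim
    case (elim x)
    then show ?case unfolding S_def \<eta>_def by (auto simp: not_less)
  qed
qed

theorem c_liminf: "AE x in M. \<forall>\<eta>>0. \<exists>m. \<forall>n\<ge>m. - \<eta> * real n \<le> c n x"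
proof -
  have "AE x in M. \<forall>q::nat. \<forall>p::nat. \<exists>m. \<forall>n\<ge>m. - (1/(real q+1) + 1/(real p+1)) * real n \<le> c n x"
    using liminf_q by (simp add: AE_all_countable)
  then show ?thesis
  proof eventually_elim
    case (elim x)
    show ?case
    proof (intro allI impI)
      fix \<eta> :: real assume "\<eta> > 0"
      then obtain q :: nat where q: "1/(real q+1) < \<eta>/2"
        by (metis half_gt_zero nat_approx_posE of_nat_Suc add.commute)
      obtain m where m: "\<forall>n\<ge>m. - (1/(real q+1) + 1/(real q+1)) * real n \<le> c n x"
        using elim by blast
      have "- \<eta> * real n \<le> c n x" if "n \<ge> m" for n
      proof -
        have "- \<eta> * real n \<le> - (1/(real q+1) + 1/(real q+1)) * real n"
          using q by (intro mult_right_mono) auto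
        then show ?thesis using m that by auto
      qed
      then show "\<exists>m. \<forall>n\<ge>m. - \<eta> * real n \<le> c n x" by blast
    qed
  qed
qed

end

lemma sum_lessThan_add_split:
  fixes f :: "nat \<Rightarrow> real"
  shows "(\<Sum>v<n+m. f v) = (\<Sum>v<n. f v) + (\<Sum>v<m. f (v + n))"
  by (induction m) (auto simp: add.commute add.left_commute)

context ergsys begin

lemma birk_upper:
  fixes g :: "'a \<Rightarrow> real"
  assumes g: "integrable M g"
  shows "AE x in M. \<forall>\<eta>>0. \<exists>m. \<forall>n\<ge>m. (\<Sum>v<n. g ((T ^^ v) x)) \<le> real n * integral\<^sup>L M g + \<eta> * real n"
proof -
  define E where "E = integral\<^sup>L M g"
  define c where "c n x = real n * E - (\<Sum>v<n. g ((T ^^ v) x))" for n x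
  have gm[measurable]: "g \<in> borel_measurable M" using g by auto
  have sint: "integrable M (\<lambda>x. \<Sum>v<n. g ((T ^^ v) x))" for n
    by (intro Bochner_Integration.integrable_sum) (rule integrable_Tn[OF g])
  have cint_n: "integrable M (c n)" for n
    unfolding c_def using sint[of n] by (intro Bochner_Integration.integrable_diff) auto
  have cI: "integral\<^sup>L M (c n) = 0" for n
  proof -
    have "integral\<^sup>L M (c n) = integral\<^sup>L M (\<lambda>x. real n * E) - integral\<^sup>L M (\<lambda>x. \<Sum>v<n. g ((T ^^ v) x))"
      unfolding c_def using sint[of n] by (intro Bochner_Integration.integral_diff) auto
    also have "integral\<^sup>L M (\<lambda>x. \<Sum>v<n. g ((T ^^ v) x)) = (\<Sum>v<n. integral\<^sup>L M (\<lambda>x. g ((T ^^ v) x)))"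
      by (intro Bochner_Integration.integral_sum) (rule integrable_Tn[OF g])
    also have "\<dots> = real n * E" by (simp add: integral_Tn E_def)
    finally show ?thesis by (simp add: prob_space)
  qed
  interpret C: subcoc M T c
  proof
    show "c n \<in> borel_measurable M" for n unfolding c_def by measurable
    show "c 0 x = 0" for x by (simp add: c_def)
    show "AE x in M. c (n + m) x \<le> c n x + c m ((T ^^ n) x)" for n m
    proof (intro AE_I2)
      fix x
      have "(\<Sum>v<n+m. g ((T ^^ v) x)) = (\<Sum>v<n. g ((T ^^ v) x)) + (\<Sum>v<m. g ((T ^^ v) ((T ^^ n) x)))"
        by (simp add: sum_lessThan_add_split funpow_T)
      then show "c (n + m) x \<le> c n x + c m ((T ^^ n) x)" by (simp add: c_def algebra_simps)
    qed
    show "integrable M (c 1)" by (rule cint_n)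
    show "0 \<le> integral\<^sup>L M F" if "integrable M F" "AE x in M. c N x \<le> F x" for N F
    proof -
      have "integral\<^sup>L M (c N) \<le> integral\<^sup>L M F"
        using that cint_n by (intro integral_mono_AE) auto
      then show ?thesis by (simp add: cI)
    qed
  qed
  show ?thesis using C.c_liminf
  proof eventually_elim
    case (elim x)
    show ?case
    proof (intro allI impI)
      fix \<eta> :: real assume "\<eta> > 0"
      then obtain m where hm: "\<forall>n\<ge>m. - \<eta> * real n \<le> c n x" using elim by blast
      show "\<exists>m. \<forall>n\<ge>m. (\<Sum>v<n. g ((T ^^ v) x)) \<le> real n * integral\<^sup>L M g + \<eta> * real n"
      proof (intro exI[of _ m] allI impI)
        fix n assume "n \<ge> m"
        then show "(\<Sum>v<n. g ((T ^^ v) x)) \<le> real n * integral\<^sup>L M g + \<eta> * real n"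
          using hm[rule_format, of n] by (simp add: c_def E_def)
      qed
    qed
  qed
qed

theorem birkhoff:
  fixes g :: "'a \<Rightarrow> real"
  assumes g: "integrable M g"
  shows "AE x in M. \<forall>\<eta>>0. \<exists>m. \<forall>n\<ge>m. \<bar>(\<Sum>v<n. g ((T ^^ v) x)) - real n * integral\<^sup>L M g\<bar> \<le> \<eta> * real n"
proof -
  have g': "integrable M (\<lambda>x. - g x)" using g by auto
  show ?thesis using birk_upper[OF g] birk_upper[OF g']
  proof eventually_elim
    case (elim x)
    show ?case
    proof (intro allI impI)
      fix \<eta> :: real assume e: "\<eta> > 0"
      obtain m1 where m1: "\<forall>n\<ge>m1. (\<Sum>v<n. g ((T ^^ v) x)) \<le> real n * integral\<^sup>L M g + \<eta> * real n"
        using elim e by blast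
      obtain m2 where m2: "\<forall>n\<ge>m2. (\<Sum>v<n. - g ((T ^^ v) x)) \<le> real n * integral\<^sup>L M (\<lambda>x. - g x) + \<eta> * real n"
        using elim e by blast
      have "\<bar>(\<Sum>v<n. g ((T ^^ v) x)) - real n * integral\<^sup>L M g\<bar> \<le> \<eta> * real n" if "n \<ge> max m1 m2" for n
        using m1[rule_format, of n] m2[rule_format, of n] that by (auto simp: sum_negf)
      then show "\<exists>m. \<forall>n\<ge>m. \<bar>(\<Sum>v<n. g ((T ^^ v) x)) - real n * integral\<^sup>L M g\<bar> \<le> \<eta> * real n"
        by blast
    qed
  qed
qed

theorem birkhoff_term:
  fixes g :: "'a \<Rightarrow> real"
  assumes g: "integrable M g"
  shows "AE x in M. \<forall>\<eta>>0. \<exists>m. \<forall>n\<ge>m. \<bar>g ((T ^^ n) x)\<bar> \<le> \<eta> * real n"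
  using birkhoff[OF g]
proof eventually_elim
  case (elim x)
  define E where "E = integral\<^sup>L M g"
  define S where "S n = (\<Sum>v<n. g ((T ^^ v) x))" for n
  show ?case
  proof (intro allI impI)
    fix \<eta> :: real assume e: "\<eta> > 0"
    obtain m where m: "\<forall>n\<ge>m. \<bar>S n - real n * E\<bar> \<le> \<eta>/3 * real n"
    proof -
      have "\<eta>/3 > 0" using e by simp
      then show ?thesis using elim that unfolding S_def E_def by blast
    qed
    define m' where "m' = max m (nat \<lceil>1 + 3 * \<bar>E\<bar> / \<eta>\<rceil>)"
    have "\<bar>g ((T ^^ n) x)\<bar> \<le> \<eta> * real n" if n: "n \<ge> m'" for n
    proof -
      have a1: "\<bar>S (Suc n) - real (Suc n) * E\<bar> \<le> \<eta>/3 * real (Suc n)"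
        using m[rule_format, of "Suc n"] n unfolding m'_def by linarith
      have a2: "\<bar>S n - real n * E\<bar> \<le> \<eta>/3 * real n"
        using m[rule_format, of n] n unfolding m'_def by linarith
      have gS: "g ((T ^^ n) x) = S (Suc n) - S n" by (simp add: S_def)
      have nb: "real n \<ge> 1 + 3 * \<bar>E\<bar> / \<eta>" using n unfolding m'_def by linarith
      then have "\<eta> * real n \<ge> \<eta> * (1 + 3 * \<bar>E\<bar> / \<eta>)" using e by (intro mult_left_mono) auto
      moreover have "\<eta> * (1 + 3 * \<bar>E\<bar> / \<eta>) = \<eta> + 3 * \<bar>E\<bar>" using e by (simp add: field_simps)
      ultimately have nb2: "\<eta> * real n \<ge> \<eta> + 3 * \<bar>E\<bar>" by simp
      have "\<bar>g ((T ^^ n) x)\<bar> \<le> \<bar>S (Suc n) - real (Suc n) * E\<bar> + \<bar>S n - real n * E\<bar> + \<bar>E\<bar>"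
      proof -
        have "g ((T ^^ n) x) = (S (Suc n) - real (Suc n) * E) - (S n - real n * E) + E"
          unfolding gS by (simp add: algebra_simps)
        then show ?thesis by (smt (verit))
      qed
      also have "\<dots> \<le> \<eta>/3 * real (Suc n) + \<eta>/3 * real n + \<bar>E\<bar>" using a1 a2 by linarith
      also have "\<dots> = \<eta>/3 * (2 * real n) + \<eta> / 3 + \<bar>E\<bar>" by (simp add: field_simps)
      also have "\<dots> \<le> \<eta> * real n" using nb2 by (simp add: algebra_simps)
      finally show ?thesis .
    qed
    then show "\<exists>m. \<forall>n\<ge>m. \<bar>g ((T ^^ n) x)\<bar> \<le> \<eta> * real n" by blast
  qed
qed

end

lemma ext_eq_int:
  fixes f :: "'a \<Rightarrow> real"
  assumes "integrable M f"
  shows "ext_integral M f = ereal (integral\<^sup>L M f)"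
proof -
  have X: "(\<integral>\<^sup>+ x. ennreal (f x) \<partial>M) \<noteq> \<infinity>" and Y: "(\<integral>\<^sup>+ x. ennreal (- f x) \<partial>M) \<noteq> \<infinity>"
    using assms by auto
  obtain r where r: "(\<integral>\<^sup>+ x. ennreal (f x) \<partial>M) = ennreal r" "0 \<le> r"
    using X by (cases "(\<integral>\<^sup>+ x. ennreal (f x) \<partial>M)") auto
  obtain s where s: "(\<integral>\<^sup>+ x. ennreal (- f x) \<partial>M) = ennreal s" "0 \<le> s"
    using Y by (cases "(\<integral>\<^sup>+ x. ennreal (- f x) \<partial>M)") auto
  show ?thesis
    unfolding ext_integral_def real_lebesgue_integral_def[OF assms] r s using r(2) s(2) by simp
qed

lemma ext_le_int:
  fixes f g :: "'a \<Rightarrow> real"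
  assumes "integrable M g" "AE x in M. f x \<le> g x"
  shows "ext_integral M f \<le> ereal (integral\<^sup>L M g)"
proof -
  have "(\<integral>\<^sup>+ x. ennreal (f x) \<partial>M) \<le> (\<integral>\<^sup>+ x. ennreal (g x) \<partial>M)"
    using assms(2) by (intro nn_integral_mono_AE) (auto intro: ennreal_leI)
  moreover have "(\<integral>\<^sup>+ x. ennreal (- g x) \<partial>M) \<le> (\<integral>\<^sup>+ x. ennreal (- f x) \<partial>M)"
    using assms(2) by (intro nn_integral_mono_AE) (auto intro!: ennreal_leI)
  ultimately have "ext_integral M f \<le> ext_integral M g"
    unfolding ext_integral_def by (intro ereal_minus_mono) (auto simp: less_eq_ennreal.rep_eq)
  then show ?thesis using ext_eq_int[OF assms(1)] by simp
qed

lemma ext_integrable: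
  fixes f g :: "'a \<Rightarrow> real"
  assumes f: "f \<in> borel_measurable M" and g: "integrable M g" and le: "AE x in M. f x \<le> g x"
    and fin: "ext_integral M f \<noteq> - \<infinity>"
  shows "integrable M f"
proof -
  have "(\<integral>\<^sup>+ x. ennreal (f x) \<partial>M) \<le> (\<integral>\<^sup>+ x. ennreal (g x) \<partial>M)"
    using le by (intro nn_integral_mono_AE) (auto intro: ennreal_leI)
  moreover have "(\<integral>\<^sup>+ x. ennreal (g x) \<partial>M) \<noteq> \<infinity>" using g by auto
  ultimately have X: "(\<integral>\<^sup>+ x. ennreal (f x) \<partial>M) \<noteq> \<infinity>" by (auto simp: top_unique)
  then obtain r where r: "(\<integral>\<^sup>+ x. ennreal (f x) \<partial>M) = ennreal r" "0 \<le> r"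
    by (cases "(\<integral>\<^sup>+ x. ennreal (f x) \<partial>M)") auto
  have Y: "(\<integral>\<^sup>+ x. ennreal (- f x) \<partial>M) \<noteq> \<infinity>"
  proof
    assume "(\<integral>\<^sup>+ x. ennreal (- f x) \<partial>M) = \<infinity>"
    then have "ext_integral M f = - \<infinity>" unfolding ext_integral_def r using r(2) by simp
    then show False using fin by simp
  qed
  show ?thesis unfolding real_integrable_def using f X Y by auto
qed

context subcoc begin

lemma block_offset:
  assumes x: "x \<in> good" and k: "k \<ge> 1" and r: "r < k"
  shows "c n x \<le> (\<Sum>v<n. if v < r \<or> n < v + k then fpos ((T ^^ v) x)
                        else if (v - r) mod k = 0 then c k ((T ^^ v) x) else 0)"
proof -
  define h where "h v = (if v < r \<or> n < v + k then fpos ((T ^^ v) x)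
                        else if (v - r) mod k = 0 then c k ((T ^^ v) x) else 0)" for v
  define D where "D u = c (n - u) ((T ^^ u) x)" for u
  define R where "R = {u. u < r \<or> n < u + k \<or> (r \<le> u \<and> (u - r) mod k = 0)}"
  have xs: "x \<in> space M" using x good_space by blast
  have "D 0 - D n \<le> (\<Sum>v\<in>{0..<n}. h v)"
  proof (rule chain[where R=R])
    show "0 \<in> R" unfolding R_def by auto
    fix u assume uR: "u \<in> R" and u: "u < n"
    show "\<exists>u'>u. u' \<le> n \<and> (u' < n \<longrightarrow> u' \<in> R) \<and> D u - D u' \<le> (\<Sum>v\<in>{u..<u'}. h v)"
    proof (cases "u < r \<or> n < u + k")
      case True
      have "D u \<le> c 1 ((T ^^ u) x) + D (u + 1)"
        using good_D[OF x, of u "u + 1" n] u by (simp add: D_def)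
      moreover have "c 1 ((T ^^ u) x) \<le> h u" using True c1_fpos by (simp add: h_def)
      moreover have "u + 1 \<in> R" using True unfolding R_def by auto
      ultimately show ?thesis using u by (intro exI[of _ "u + 1"]) auto
    next
      case False
      then have u1: "r \<le> u" "u + k \<le> n" "(u - r) mod k = 0" using uR unfolding R_def by auto
      have "D u \<le> c k ((T ^^ u) x) + D (u + k)"
        using good_D[OF x, of u "u + k" n] u1 by (simp add: D_def)
      moreover have "c k ((T ^^ u) x) \<le> (\<Sum>v\<in>{u..<u+k}. h v)"
      proof -
        have hu: "h u = c k ((T ^^ u) x)" using False u1 by (simp add: h_def)
        have "0 \<le> h v" if "v \<in> {Suc u..<u+k}" for v
        proof -
          have "(v - r) mod k \<noteq> 0"
          proof
            assume "(v - r) mod k = 0"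
            then have d1: "k dvd (v - r)" by (simp add: dvd_eq_mod_eq_0)
            have d2: "k dvd (u - r)" using u1 by (simp add: dvd_eq_mod_eq_0)
            have "v - r = (u - r) + (v - u)" using that u1 by auto
            then have "k dvd (v - u)" using d1 d2 dvd_add_right_iff by metis
            moreover have "0 < v - u" "v - u < k" using that by auto
            ultimately show False using nat_dvd_not_less by blast
          qed
          then show ?thesis using fpos_nn unfolding h_def by auto
        qed
        then have "0 \<le> (\<Sum>v\<in>{Suc u..<u+k}. h v)" by (intro sum_nonneg) auto
        moreover have "(\<Sum>v\<in>{u..<u+k}. h v) = h u + (\<Sum>v\<in>{Suc u..<u+k}. h v)"
          using k by (simp add: sum.atLeast_Suc_lessThan)
        ultimately show ?thesis using hu by simp
      qed
      moreover have "u + k \<in> R"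
      proof -
        have "u + k - r = (u - r) + k" using u1 by auto
        then have "(u + k - r) mod k = (u - r) mod k" by (simp only: mod_add_self2)
        then have "(u + k - r) mod k = 0" using u1 by simp
        then show ?thesis using u1 unfolding R_def by auto
      qed
      ultimately show ?thesis using u1 k by (intro exI[of _ "u + k"]) auto
    qed
  qed simp
  moreover have "D 0 = c n x" by (simp add: D_def)
  moreover have "D n = 0" by (simp add: D_def c0 xs)
  ultimately show ?thesis by (simp add: h_def atLeast0LessThan)
qed

lemma block_avg:
  assumes x: "x \<in> good" and k: "k \<ge> 1"
  shows "real k * c n x \<le> (\<Sum>v<n. if v + k \<le> n then c k ((T ^^ v) x) else 0)
      + real k * (\<Sum>v<n. if v < k \<or> n < v + k then fpos ((T ^^ v) x) else 0)"
proof -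
  define h where "h r v = (if v < r \<or> n < v + k then fpos ((T ^^ v) x)
                        else if (v - r) mod k = 0 then c k ((T ^^ v) x) else 0)" for r v
  define A where "A v = (if v < k \<or> n < v + k then fpos ((T ^^ v) x) else 0)" for v
  define B where "B r v = (if r = v mod k \<and> v + k \<le> n then c k ((T ^^ v) x) else 0)" for r v
  have hAB: "h r v \<le> A v + B r v" if r: "r < k" for r v
  proof (cases "v < r \<or> n < v + k")
    case True
    have "B r v = 0"
    proof -
      have "\<not> (r = v mod k \<and> v + k \<le> n)" using True by (auto, meson mod_less_eq_dividend not_le)
      then show ?thesis unfolding B_def by presburger
    qed
    moreover have "A v = fpos ((T ^^ v) x)" using True r by (auto simp: A_def)
    ultimately show ?thesis using True by (simp add: h_def)
  next
    case False
    have eq: "(v - r) mod k = 0 \<longleftrightarrow> r = v mod k"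
    proof -
      have "r \<le> v" using False by simp
      then have "(v mod k = r mod k) \<longleftrightarrow> k dvd (v - r)" by (rule mod_eq_dvd_iff_nat)
      moreover have "r mod k = r" using r by simp
      ultimately show ?thesis by (auto simp: dvd_eq_mod_eq_0)
    qed
    have "0 \<le> A v" using fpos_nn by (simp add: A_def)
    then show ?thesis using False eq by (auto simp: h_def B_def)
  qed
  have "real k * c n x = (\<Sum>r<k. c n x)" by simp
  also have "\<dots> \<le> (\<Sum>r<k. \<Sum>v<n. h r v)"
    by (intro sum_mono) (use block_offset[OF x k] in \<open>simp add: h_def\<close>)
  also have "\<dots> = (\<Sum>v<n. \<Sum>r<k. h r v)" by (rule sum.swap)
  also have "\<dots> \<le> (\<Sum>v<n. \<Sum>r<k. A v + B r v)"
    by (intro sum_mono hAB) auto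
  also have "\<dots> = (\<Sum>v<n. real k * A v + (if v + k \<le> n then c k ((T ^^ v) x) else 0))"
  proof (intro sum.cong refl)
    fix v
    have "(\<Sum>r<k. B r v) = (if v + k \<le> n then c k ((T ^^ v) x) else 0)"
    proof -
      have "(\<Sum>r<k. B r v) = (\<Sum>r\<in>{..<k}. if r = v mod k then (if v + k \<le> n then c k ((T ^^ v) x) else 0) else 0)"
        by (intro sum.cong) (auto simp: B_def)
      also have "\<dots> = (if v + k \<le> n then c k ((T ^^ v) x) else 0)"
        using k by (subst sum.delta) auto
      finally show ?thesis .
    qed
    then show "(\<Sum>r<k. A v + B r v) = real k * A v + (if v + k \<le> n then c k ((T ^^ v) x) else 0)"
      by (simp add: sum.distrib)
  qed
  also have "\<dots> = (\<Sum>v<n. if v + k \<le> n then c k ((T ^^ v) x) else 0) + real k * (\<Sum>v<n. A v)"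
    by (simp add: sum.distrib sum_distrib_left)
  finally show ?thesis by (simp add: A_def)
qed

end
locale gk = ergsys +
  fixes a :: "nat \<Rightarrow> 'a \<Rightarrow> real" and A :: real
  assumes a_meas[measurable]: "\<And>n. a n \<in> borel_measurable M"
    and a0: "\<And>x. x \<in> space M \<Longrightarrow> a 0 x = 0"
    and asub: "\<And>n m. n > 0 \<Longrightarrow> m > 0 \<Longrightarrow> AE x in M. a (n + m) x \<le> a n x + a m ((T ^^ n) x)"
    and aint: "integrable M (a 1)"
    and aINF: "(INF n\<in>{1::nat..}. ext_integral M (a n) / ereal (real n)) = ereal A"
begin

definition b :: "nat \<Rightarrow> 'a \<Rightarrow> real" where "b n x = a n x - A * real n"

lemma b_meas[measurable]: "b n \<in> borel_measurable M" unfolding b_def by measurable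

lemma ext_ge: assumes "n \<ge> 1" shows "ereal (A * real n) \<le> ext_integral M (a n)"
proof -
  have "ereal A \<le> ext_integral M (a n) / ereal (real n)"
    using INF_lower[of n "{1..}" "\<lambda>n. ext_integral M (a n) / ereal (real n)"] assms aINF by simp
  then have "ereal (real n) * ereal A \<le> ext_integral M (a n)"
    using assms by (subst (asm) ereal_le_divide_pos) auto
  then show ?thesis by (simp add: mult.commute)
qed

sublocale B: subcoc M T b
proof
  show "b n \<in> borel_measurable M" for n by simp
  show "b 0 x = 0" if "x \<in> space M" for x using a0[OF that] by (simp add: b_def)
  show "AE x in M. b (n + m) x \<le> b n x + b m ((T ^^ n) x)" if "n > 0" "m > 0" for n m
    using asub[OF that] by eventually_elim (simp add: b_def algebra_simps)
  show "integrable M (b 1)" unfolding b_def using aint by auto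
  show "0 \<le> integral\<^sup>L M F" if F: "integrable M F" "AE x in M. b N x \<le> F x" for N F
  proof (cases "N = 0")
    case True
    have "AE x in M. 0 \<le> F x" using F(2) AE_space
      by eventually_elim (use True a0 in \<open>auto simp: b_def\<close>)
    then show ?thesis by (rule integral_nonneg_AE)
  next
    case False
    have "ext_integral M (a N) \<le> ereal (integral\<^sup>L M (\<lambda>x. F x + A * real N))"
      by (rule ext_le_int) (use F in \<open>auto simp: b_def\<close>)
    moreover have "integral\<^sup>L M (\<lambda>x. F x + A * real N) = integral\<^sup>L M F + A * real N"
      using F by (simp add: prob_space)
    ultimately have "ereal (A * real N) \<le> ereal (integral\<^sup>L M F + A * real N)"
      using ext_ge[of N] False by (metis order_trans less_one not_le)
    then show ?thesis by simp
  qed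
qed

lemma a_integrable: assumes k: "k \<ge> 1" shows "integrable M (a k)"
proof -
  define U where "U x = (\<Sum>v<k. b 1 ((T ^^ v) x)) + A * real k" for x
  have "integrable M (\<lambda>x. \<Sum>v<k. b 1 ((T ^^ v) x))"
    by (intro Bochner_Integration.integrable_sum) (rule integrable_Tn[OF B.cint])
  then have Ui: "integrable M U" unfolding U_def by auto
  have "AE x in M. a k x \<le> U x" using B.AE_good
  proof eventually_elim
    case (elim x)
    have "b k x \<le> (\<Sum>v<k. b 1 ((T ^^ v) x))"
      using B.good_unit[OF elim, of k 0] by (simp add: atLeast0LessThan)
    then show ?case by (simp add: U_def b_def)
  qed
  moreover have "ext_integral M (a k) \<noteq> - \<infinity>" using ext_ge[OF k] by auto
  ultimately show ?thesis using ext_integrable[OF a_meas Ui] by blast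
qed

lemma b_integrable: assumes k: "k \<ge> 1" shows "integrable M (b k)"
  unfolding b_def using a_integrable[OF k] by auto

lemma b_int_nn: assumes k: "k \<ge> 1" shows "0 \<le> integral\<^sup>L M (b k)"
proof -
  have "ereal (A * real k) \<le> ereal (integral\<^sup>L M (a k))"
    using ext_ge[OF k] ext_eq_int[OF a_integrable[OF k]] by simp
  moreover have "integral\<^sup>L M (b k) = integral\<^sup>L M (a k) - A * real k"
    unfolding b_def using a_integrable[OF k] by (simp add: prob_space)
  ultimately show ?thesis by simp
qed

lemma b_int_small: assumes "\<theta> > 0" shows "\<exists>k\<ge>1. integral\<^sup>L M (b k) \<le> \<theta> * real k"
proof -
  have "(INF n\<in>{1::nat..}. ext_integral M (a n) / ereal (real n)) < ereal (A + \<theta>)"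
    using aINF assms by simp
  then obtain k where k: "k \<ge> 1" "ext_integral M (a k) / ereal (real k) < ereal (A + \<theta>)"
    by (auto simp: INF_less_iff)
  then have "\<not> ereal (real k) * ereal (A + \<theta>) \<le> ext_integral M (a k)"
    by (subst ereal_le_divide_pos[symmetric]) auto
  then have "integral\<^sup>L M (a k) < real k * (A + \<theta>)"
    using ext_eq_int[OF a_integrable[OF k(1)]] by simp
  moreover have "integral\<^sup>L M (b k) = integral\<^sup>L M (a k) - A * real k"
    unfolding b_def using a_integrable[OF k(1)] by (simp add: prob_space)
  ultimately show ?thesis using k(1) by (intro exI[of _ k]) (auto simp: algebra_simps)
qed

lemma sum_if_prefix:
  fixes f :: "nat \<Rightarrow> real"
  assumes "j \<le> n"
  shows "(\<Sum>v<n. if v < j then f v else 0) = (\<Sum>v<j. f v)"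
proof -
  have "(\<Sum>v<n. if v < j then f v else 0) = sum f {v\<in>{..<n}. v < j}"
    by (rule sum.inter_filter[symmetric]) simp
  also have "{v\<in>{..<n}. v < j} = {..<j}" using assms by auto
  finally show ?thesis .
qed

theorem b_limsup: "AE x in M. \<forall>\<theta>>0. \<exists>m. \<forall>n\<ge>m. b n x \<le> \<theta> * real n"
proof -
  have "AE x in M. \<forall>\<eta>>0. \<exists>m. \<forall>n\<ge>m. \<bar>(\<Sum>v<n. b (Suc k) ((T ^^ v) x)) - real n * integral\<^sup>L M (b (Suc k))\<bar> \<le> \<eta> * real n" for k
    by (rule birkhoff[OF b_integrable]) simp
  then have bir: "AE x in M. \<forall>k. \<forall>\<eta>>0. \<exists>m. \<forall>n\<ge>m. \<bar>(\<Sum>v<n. b (Suc k) ((T ^^ v) x)) - real n * integral\<^sup>L M (b (Suc k))\<bar> \<le> \<eta> * real n"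
    by (simp add: AE_all_countable)
  show ?thesis using B.AE_good bir birkhoff_term[OF B.fpos_int]
  proof eventually_elim
    case (elim x)
    show ?case
    proof (intro allI impI)
      fix \<theta> :: real assume th: "\<theta> > 0"
      obtain k where k: "k \<ge> 1" "integral\<^sup>L M (b k) \<le> \<theta>/4 * real k"
        using b_int_small[of "\<theta>/4"] th by auto
      define E where "E = integral\<^sup>L M (b k)"
      have E0: "0 \<le> E" unfolding E_def by (rule b_int_nn[OF k(1)])
      define \<eta> where "\<eta> = \<theta> * real k / 4"
      have eta: "\<eta> > 0" using th k by (simp add: \<eta>_def)
      define S where "S n = (\<Sum>v<n. b k ((T ^^ v) x))" for n
      have kS: "Suc (k - 1) = k" using k by simp
      obtain m1 where m1: "\<forall>n\<ge>m1. \<bar>S n - real n * E\<bar> \<le> \<eta> * real n"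
        using elim(2) eta kS unfolding S_def E_def by metis
      define \<eta>' where "\<eta>' = \<theta> / (4 * real k)"
      have eta': "\<eta>' > 0" using th k by (simp add: \<eta>'_def)
      obtain m2 where m2: "\<forall>n\<ge>m2. \<bar>B.fpos ((T ^^ n) x)\<bar> \<le> \<eta>' * real n"
        using elim(3) eta' by blast
      define C where "C = (\<Sum>v<k. B.fpos ((T ^^ v) x))"
      define m where "m = m1 + m2 + k + nat \<lceil>4 * C / \<theta>\<rceil>"
      have "b n x \<le> \<theta> * real n" if n: "n \<ge> m" for n
      proof -
        have kn: "k \<le> n" using n by (simp add: m_def)
        have blk: "real k * b n x \<le> (\<Sum>v<n. if v + k \<le> n then b k ((T ^^ v) x) else 0)
            + real k * (\<Sum>v<n. if v < k \<or> n < v + k then B.fpos ((T ^^ v) x) else 0)"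
          by (rule B.block_avg[OF elim(1) k(1)])
        have P1: "(\<Sum>v<n. if v + k \<le> n then b k ((T ^^ v) x) else 0) \<le> real n * (E + \<eta>)"
        proof -
          have "(\<Sum>v<n. if v + k \<le> n then b k ((T ^^ v) x) else 0) = (\<Sum>v<n. if v < n - k + 1 then b k ((T ^^ v) x) else 0)"
            using k(1) kn by (intro sum.cong) auto
          also have "\<dots> = S (n - k + 1)" unfolding S_def using k(1) kn by (intro sum_if_prefix) auto
          also have "\<dots> \<le> real (n - k + 1) * E + \<eta> * real (n - k + 1)"
          proof -
            have "n - k + 1 \<ge> m1" using n unfolding m_def by auto
            then have "\<bar>S (n - k + 1) - real (n - k + 1) * E\<bar> \<le> \<eta> * real (n - k + 1)"
              using m1 by blast
            then show ?thesis by linarith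
          qed
          also have "\<dots> = real (n - k + 1) * (E + \<eta>)" by (simp add: algebra_simps)
          also have "\<dots> \<le> real n * (E + \<eta>)"
            using E0 eta k(1) kn by (intro mult_right_mono) auto
          finally show ?thesis .
        qed
        have P2: "(\<Sum>v<n. if v < k \<or> n < v + k then B.fpos ((T ^^ v) x) else 0) \<le> C + real k * (\<eta>' * real n)"
        proof -
          have "(\<Sum>v<n. if v < k \<or> n < v + k then B.fpos ((T ^^ v) x) else 0)
              \<le> (\<Sum>v<n. (if v < k then B.fpos ((T ^^ v) x) else 0) + (if n < v + k then \<eta>' * real n else 0))"
          proof (intro sum_mono)
            fix v assume v: "v \<in> {..<n}"
            show "(if v < k \<or> n < v + k then B.fpos ((T ^^ v) x) else 0)
                \<le> (if v < k then B.fpos ((T ^^ v) x) else 0) + (if n < v + k then \<eta>' * real n else 0)"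
            proof (cases "v < k")
              case True
              then show ?thesis using eta' by auto
            next
              case False
              show ?thesis
              proof (cases "n < v + k")
                case True
                have "v \<ge> m2" using True n unfolding m_def by auto
                then have "B.fpos ((T ^^ v) x) \<le> \<eta>' * real v" using m2 B.fpos_nn by fastforce
                also have "\<dots> \<le> \<eta>' * real n" using v eta' by (intro mult_left_mono) auto
                finally show ?thesis using False True by auto
              qed (use False in auto)
            qed
          qed
          also have "\<dots> = (\<Sum>v<n. if v < k then B.fpos ((T ^^ v) x) else 0) + (\<Sum>v<n. if n < v + k then \<eta>' * real n else 0)"
            by (simp add: sum.distrib)
          also have "(\<Sum>v<n. if v < k then B.fpos ((T ^^ v) x) else 0) = C"
            unfolding C_def using kn by (rule sum_if_prefix)
          also have "(\<Sum>v<n. if n < v + k then \<eta>' * real n else 0) \<le> real k * (\<eta>' * real n)"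
            using kn eta' by (intro B.sum_tail_bound) auto
          finally show ?thesis by simp
        qed
        have C0: "0 \<le> C" unfolding C_def by (intro sum_nonneg) (simp add: B.fpos_nn)
        have Cn: "C \<le> \<theta> * real n / 4"
        proof -
          have "4 * C / \<theta> \<le> real n" using n unfolding m_def by linarith
          then show ?thesis using th by (simp add: field_simps)
        qed
        have "real k * b n x \<le> real n * (E + \<eta>) + real k * (C + real k * (\<eta>' * real n))"
          using blk P1 P2 k(1) by (smt (verit) mult_left_mono of_nat_0_le_iff)
        also have "\<dots> = real n * E + real n * \<eta> + real k * C + real k * real k * \<eta>' * real n"
          by (simp add: algebra_simps)
        also have "real k * real k * \<eta>' * real n = real k * (\<theta> * real n / 4)"
          using k(1) by (simp add: \<eta>'_def field_simps)
        also have "real n * \<eta> = real k * (\<theta> * real n / 4)" by (simp add: \<eta>_def)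
        also have "real n * E \<le> real k * (\<theta> * real n / 4)"
        proof -
          have "real n * E \<le> real n * (\<theta>/4 * real k)" using k(2) unfolding E_def by (intro mult_left_mono) auto
          then show ?thesis by (simp add: algebra_simps)
        qed
        also have "real k * C \<le> real k * (\<theta> * real n / 4)" using Cn by (intro mult_left_mono) auto
        finally have "real k * b n x \<le> real k * (\<theta> * real n)" by (simp add: algebra_simps)
        then show ?thesis using k(1) by simp
      qed
      then show "\<exists>m. \<forall>n\<ge>m. b n x \<le> \<theta> * real n" by blast
    qed
  qed
qed

end

lemma sum_rev_shift:
  fixes f :: "nat \<Rightarrow> real"
  shows "(\<Sum>v<N. f (N - v)) = (\<Sum>n\<in>{1..N}. f n)"
proof (induction N)
  case 0 then show ?case by simp
next
  case (Suc N)
  have "(\<Sum>v<Suc N. f (Suc N - v)) = f (Suc N) + (\<Sum>v<N. f (Suc N - Suc v))"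
    by (subst sum.lessThan_Suc_shift) simp
  also have "(\<Sum>v<N. f (Suc N - Suc v)) = (\<Sum>v<N. f (N - v))" by simp
  also have "\<dots> = (\<Sum>n\<in>{1..N}. f n)" by (rule Suc)
  finally show ?case by (simp add: add.commute)
qed

context gk begin

definition Gd :: "nat \<Rightarrow> real \<Rightarrow> nat \<Rightarrow> 'a set" where
  "Gd KG \<epsilon> n = {x \<in> space M. \<forall>l. KG \<le> l \<and> l \<le> n \<longrightarrow> b (n - l) ((T ^^ l) x) \<le> b n x + \<epsilon> * real l}"

lemma Gd_sets[measurable]: "Gd KG \<epsilon> n \<in> sets M"
  unfolding Gd_def by measurable

lemma Gd_0: "KG \<ge> 1 \<Longrightarrow> Gd KG \<epsilon> 0 = space M"
  by (auto simp: Gd_def)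

lemma dom_conv:
  fixes g :: "nat \<Rightarrow> 'a \<Rightarrow> real"
  assumes [measurable]: "\<And>K. g K \<in> borel_measurable M"
    and "AE x in M. eventually (\<lambda>K. g K x = 0) sequentially"
    and "\<And>K x. 0 \<le> g K x" "\<And>K x. g K x \<le> B.fpos x"
  shows "(\<lambda>K. integral\<^sup>L M (g K)) \<longlonglongrightarrow> 0"
proof -
  have "(\<lambda>K. integral\<^sup>L M (g K)) \<longlonglongrightarrow> integral\<^sup>L M (\<lambda>x. 0)"
  proof (rule integral_dominated_convergence[where w=B.fpos])
    show "AE x in M. (\<lambda>K. g K x) \<longlonglongrightarrow> 0" using assms(2) by eventually_elim (rule tendsto_eventually)
    show "AE x in M. norm (g K x) \<le> B.fpos x" for K using assms(3,4) by (intro AE_I2) auto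
  qed (auto simp: B.fpos_int)
  then show ?thesis by simp
qed

lemma gk_core:
  assumes eps: "\<epsilon> > 0" and rho: "\<rho> > 0"
  shows "\<exists>KG\<ge>1. \<exists>C. \<forall>N. (\<Sum>n<N. measure M (space M - Gd KG \<epsilon> n)) \<le> \<rho> * real N + C"
proof -
  define \<epsilon>' where "\<epsilon>' = \<rho> * \<epsilon> / 12"
  have eps': "\<epsilon>' > 0" using eps rho by (simp add: \<epsilon>'_def)
  define E where "E K = {x \<in> space M. \<exists>k\<in>{1..K}. b k x \<le> \<epsilon>' * real k}" for K
  have E_sets[measurable]: "E K \<in> sets M" for K unfolding E_def by measurable
  define gE where "gE K x = (indicator (space M - E K) x :: real)" for K x
  have gE_meas[measurable]: "gE K \<in> borel_measurable M" for K unfolding gE_def by measurable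
  have gE01: "0 \<le> gE K x" "gE K x \<le> 1" for K x by (auto simp: gE_def indicator_def)
  have "(\<lambda>K. integral\<^sup>L M (\<lambda>x. B.fpos x * gE K x)) \<longlonglongrightarrow> 0"
  proof (rule dom_conv)
    show "AE x in M. eventually (\<lambda>K. B.fpos x * gE K x = 0) sequentially"
      using b_limsup
    proof eventually_elim
      case (elim x)
      obtain m where m: "\<forall>n\<ge>m. b n x \<le> \<epsilon>' * real n" using elim eps' by blast
      show ?case
      proof (cases "x \<in> space M")
        case True
        have "x \<in> E K" if "K \<ge> max m 1" for K
          using m True that unfolding E_def by (intro CollectI conjI bexI[of _ "max m 1"]) auto
        then show ?thesis unfolding eventually_sequentially gE_def by (intro exI[of _ "max m 1"]) auto
      qed (simp add: gE_def)
    qed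
    show "0 \<le> B.fpos x * gE K x" for K x using gE01 B.fpos_nn by simp
    show "B.fpos x * gE K x \<le> B.fpos x" for K x using gE01 B.fpos_nn by (simp add: mult_left_le)
  qed measurable
  then have "eventually (\<lambda>K. integral\<^sup>L M (\<lambda>x. B.fpos x * gE K x) < \<epsilon>') sequentially"
    using eps' by (rule order_tendstoD)
  then obtain KE0 where KE0: "\<forall>K\<ge>KE0. integral\<^sup>L M (\<lambda>x. B.fpos x * gE K x) < \<epsilon>'"
    unfolding eventually_sequentially by blast
  define KE where "KE = max KE0 1"
  have KE: "KE \<ge> 1" "integral\<^sup>L M (\<lambda>x. B.fpos x * gE KE x) < \<epsilon>'" using KE0 by (auto simp: KE_def)
  define gM where "gM j x = (if real j < B.fpos x then B.fpos x else 0)" for j :: nat and x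
  have gM_meas[measurable]: "gM j \<in> borel_measurable M" for j unfolding gM_def by measurable
  have "(\<lambda>j. integral\<^sup>L M (gM j)) \<longlonglongrightarrow> 0"
  proof (rule dom_conv)
    show "AE x in M. eventually (\<lambda>j. gM j x = 0) sequentially"
    proof (intro AE_I2)
      fix x
      obtain j0 :: nat where "B.fpos x < real j0" using reals_Archimedean2 by blast
      then show "eventually (\<lambda>j. gM j x = 0) sequentially"
        unfolding eventually_sequentially gM_def by (intro exI[of _ j0]) auto
    qed
    show "0 \<le> gM j x" for j x using B.fpos_nn by (simp add: gM_def)
    show "gM j x \<le> B.fpos x" for j x using B.fpos_nn by (simp add: gM_def)
  qed measurable
  then have "eventually (\<lambda>j. integral\<^sup>L M (gM j) < \<epsilon>') sequentially"
    using eps' by (rule order_tendstoD)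
  then obtain j where j: "integral\<^sup>L M (gM j) < \<epsilon>'"
    unfolding eventually_sequentially by blast
  define Mj where "Mj = real j"
  define KG where "KG = max 1 (nat \<lceil>2 * Mj * real KE / \<epsilon>\<rceil>)"
  have KG: "KG \<ge> 1" "Mj * real KE \<le> \<epsilon> / 2 * real KG"
  proof -
    show "KG \<ge> 1" by (simp add: KG_def)
    have "2 * Mj * real KE / \<epsilon> \<le> real KG" unfolding KG_def by linarith
    then show "Mj * real KE \<le> \<epsilon> / 2 * real KG" using eps by (simp add: field_simps)
  qed
  define \<epsilon>1 where "\<epsilon>1 = \<epsilon> / 2"
  define If where "If = integral\<^sup>L M B.fpos"
  have If0: "0 \<le> If" unfolding If_def by (intro integral_nonneg_AE) (simp add: B.fpos_nn)
  define H where "H N v x = \<epsilon>' + B.fpos ((T ^^ v) x) * gE KE ((T ^^ v) x) + gM j ((T ^^ v) x)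
      + (if N < v + KE then B.fpos ((T ^^ v) x) else 0)" for N v x
  define NL where "NL N v x = (indicator (space M - Gd KG \<epsilon> (N - v)) ((T ^^ v) x) :: real)" for N v x
  have gM0: "0 \<le> gM j y" for y using B.fpos_nn by (simp add: gM_def)
  have H_ge: "\<epsilon>' + gM j ((T ^^ v) x) \<le> H N v x" for N v x
    using B.fpos_nn gE01 unfolding H_def by (auto intro!: add_nonneg_nonneg mult_nonneg_nonneg)
  have fpos_Mj: "B.fpos y \<le> Mj + gM j y" for y using gM0 by (auto simp: gM_def Mj_def)
  have pw: "b N x \<le> (\<Sum>v<N. H N v x - \<epsilon>1 * NL N v x)" if x: "x \<in> B.good" for N x
  proof -
    have xs: "x \<in> space M" using x B.good_space by blast
    define D where "D u = b (N - u) ((T ^^ u) x)" for u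
    define h where "h v = H N v x - \<epsilon>1 * NL N v x" for v
    define nl where "nl v \<longleftrightarrow> (T ^^ v) x \<notin> Gd KG \<epsilon> (N - v)" for v
    have NL_eq: "NL N v x = (if nl v then 1 else 0)" for v
      using xs by (simp add: NL_def nl_def indicator_def)
    have eps1: "0 < \<epsilon>1" "\<epsilon>1 \<le> \<epsilon>" using eps by (auto simp: \<epsilon>1_def)
    have h_ge: "- \<epsilon>1 \<le> h v" for v
      using H_ge[of v x N] eps' gM0[of "(T ^^ v) x"] eps1 unfolding h_def NL_eq by auto
    have h_nl: "\<not> nl v \<Longrightarrow> h v = H N v x" for v unfolding h_def NL_eq by simp
    have unGd: "\<exists>l. KG \<le> l \<and> l \<le> N - v \<and> D v + \<epsilon> * real l < D (v + l)" if "nl v" for v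
    proof -
      from that xs obtain l where l: "KG \<le> l" "l \<le> N - v"
        "\<not> b (N - v - l) ((T ^^ l) ((T ^^ v) x)) \<le> b (N - v) ((T ^^ v) x) + \<epsilon> * real l"
        unfolding nl_def Gd_def by auto
      have "(T ^^ l) ((T ^^ v) x) = (T ^^ (v + l)) x" by (simp add: funpow_T add.commute)
      moreover have "N - v - l = N - (v + l)" by simp
      ultimately show ?thesis using l by (intro exI[of _ l]) (auto simp: D_def)
    qed
    have sum_ge: "- \<epsilon>1 * real l \<le> (\<Sum>v\<in>{u..<u+l}. h v)" for u l
    proof -
      have "(\<Sum>v\<in>{u..<u+l}. - \<epsilon>1) \<le> (\<Sum>v\<in>{u..<u+l}. h v)" by (intro sum_mono h_ge)
      then show ?thesis by (simp add: mult.commute)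
    qed
    have "D 0 - D N \<le> (\<Sum>v\<in>{0..<N}. h v)"
    proof (rule chain[where R=UNIV])
      fix u assume u: "u < N"
      show "\<exists>u'>u. u' \<le> N \<and> (u' < N \<longrightarrow> u' \<in> UNIV) \<and> D u - D u' \<le> (\<Sum>v\<in>{u..<u'}. h v)"
      proof (cases "nl u")
        case True
        then obtain l where l: "KG \<le> l" "l \<le> N - u" "D u + \<epsilon> * real l < D (u + l)" using unGd by blast
        have "D u - D (u + l) < - \<epsilon> * real l" using l by simp
        also have "\<dots> \<le> - \<epsilon>1 * real l" using eps1 by (intro mult_right_mono) auto
        also have "\<dots> \<le> (\<Sum>v\<in>{u..<u+l}. h v)" by (rule sum_ge)
        finally show ?thesis using l KG(1) u by (intro exI[of _ "u + l"]) auto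
      next
        case nlu: False
        show ?thesis
        proof (cases "u + KE \<le> N \<and> (T ^^ u) x \<in> E KE")
          case True
          note uKE = True
          then obtain k where k: "k \<in> {1..KE}" "b k ((T ^^ u) x) \<le> \<epsilon>' * real k"
            by (auto simp: E_def)
          show ?thesis
          proof (cases "\<exists>v. u < v \<and> v < u + k \<and> nl v")
            case True
            define t where "t = (LEAST v. u < v \<and> v < u + k \<and> nl v)"
            have t: "u < t" "t < u + k" "nl t" using LeastI_ex[OF True] unfolding t_def by auto
            have before: "\<not> nl v" if "u \<le> v" "v < t" for v
            proof (cases "v = u")
              case True then show ?thesis using nlu by simp
            next
              case False
              then have "u < v" using that by simp
              moreover have "v < u + k" using that t by simp
              ultimately show ?thesis using not_less_Least[of v "\<lambda>v. u < v \<and> v < u + k \<and> nl v"] that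
                unfolding t_def by blast
            qed
            obtain l where l: "KG \<le> l" "l \<le> N - t" "D t + \<epsilon> * real l < D (t + l)"
              using unGd[OF t(3)] by blast
            have tN: "t \<le> N" using t uKE k by auto
            have "D u \<le> b (t - u) ((T ^^ u) x) + D t"
              using B.good_D[OF x, of u t N] t tN by (simp add: D_def)
            moreover have "b (t - u) ((T ^^ u) x) \<le> real KE * Mj + (\<Sum>v\<in>{u..<t}. gM j ((T ^^ v) x))"
            proof -
              have "b (t - u) ((T ^^ u) x) \<le> (\<Sum>v\<in>{u..<u + (t - u)}. b 1 ((T ^^ v) x))"
                by (rule B.good_unit[OF x])
              also have "\<dots> = (\<Sum>v\<in>{u..<t}. b 1 ((T ^^ v) x))" using t by simp
              also have "\<dots> \<le> (\<Sum>v\<in>{u..<t}. Mj + gM j ((T ^^ v) x))"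
                by (intro sum_mono order_trans[OF B.c1_fpos fpos_Mj])
              also have "\<dots> = real (t - u) * Mj + (\<Sum>v\<in>{u..<t}. gM j ((T ^^ v) x))"
                by (simp add: sum.distrib)
              also have "real (t - u) * Mj \<le> real KE * Mj"
                using t k by (intro mult_right_mono) (auto simp: Mj_def)
              finally show ?thesis by simp
            qed
            moreover have "(\<Sum>v\<in>{u..<t}. gM j ((T ^^ v) x)) - \<epsilon>1 * real l \<le> (\<Sum>v\<in>{u..<t+l}. h v)"
            proof -
              have "(\<Sum>v\<in>{u..<t}. gM j ((T ^^ v) x)) \<le> (\<Sum>v\<in>{u..<t}. h v)"
              proof (intro sum_mono)
                fix v assume "v \<in> {u..<t}"
                then have "h v = H N v x" using before h_nl by auto
                then show "gM j ((T ^^ v) x) \<le> h v" using H_ge[of v x N] eps' by simp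
              qed
              moreover have "- \<epsilon>1 * real l \<le> (\<Sum>v\<in>{t..<t+l}. h v)" by (rule sum_ge)
              moreover have "(\<Sum>v\<in>{u..<t+l}. h v) = (\<Sum>v\<in>{u..<t}. h v) + (\<Sum>v\<in>{t..<t+l}. h v)"
                using t by (intro sum.atLeastLessThan_concat[symmetric]) auto
              ultimately show ?thesis by linarith
            qed
            moreover have "real KE * Mj \<le> (\<epsilon> - \<epsilon>1) * real l"
            proof -
              have "real KE * Mj \<le> \<epsilon> / 2 * real KG" using KG(2) by (simp add: mult.commute)
              also have "\<dots> \<le> \<epsilon> / 2 * real l" using l eps by (intro mult_left_mono) auto
              finally show ?thesis by (simp add: \<epsilon>1_def)
            qed
            ultimately have "D u - D (t + l) \<le> (\<Sum>v\<in>{u..<t+l}. h v)"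
              using l(3) by (simp add: algebra_simps)
            then show ?thesis using t l KG(1) by (intro exI[of _ "t + l"]) auto
          next
            case False
            have "D u \<le> b k ((T ^^ u) x) + D (u + k)"
              using B.good_D[OF x, of u "u + k" N] uKE k by (simp add: D_def)
            moreover have "\<epsilon>' * real k \<le> (\<Sum>v\<in>{u..<u+k}. h v)"
            proof -
              have "(\<Sum>v\<in>{u..<u+k}. \<epsilon>') \<le> (\<Sum>v\<in>{u..<u+k}. h v)"
              proof (intro sum_mono)
                fix v assume v: "v \<in> {u..<u+k}"
                have "\<not> nl v" using False nlu v by (cases "v = u") auto
                then show "\<epsilon>' \<le> h v" using h_nl H_ge[of v x N] gM0[of "(T ^^ v) x"] by simp
              qed
              then show ?thesis by (simp add: mult.commute)
            qed
            ultimately show ?thesis using k uKE by (intro exI[of _ "u + k"]) auto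
          qed
        next
          case False
          have "D u \<le> b 1 ((T ^^ u) x) + D (u + 1)"
            using B.good_D[OF x, of u "u + 1" N] u by (simp add: D_def)
          moreover have "b 1 ((T ^^ u) x) \<le> h u"
          proof -
            have sp: "(T ^^ u) x \<in> space M" using xs by simp
            have "B.fpos ((T ^^ u) x) \<le> H N u x"
              using False sp B.fpos_nn[of "(T ^^ u) x"] gM0[of "(T ^^ u) x"] eps'
              by (auto simp: H_def gE_def)
            then show ?thesis using B.c1_fpos[of "(T ^^ u) x"] h_nl[OF nlu] by simp
          qed
          ultimately show ?thesis using u by (intro exI[of _ "u + 1"]) auto
        qed
      qed
    qed auto
    moreover have "D 0 = b N x" by (simp add: D_def)
    moreover have "D N = 0" by (simp add: D_def B.c0 xs)
    ultimately show ?thesis by (simp add: h_def atLeast0LessThan)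
  qed
  define hH where "hH N v y = \<epsilon>' + B.fpos y * gE KE y + gM j y + (if N < v + KE then B.fpos y else 0)" for N v y
  have fgE_int: "integrable M (\<lambda>y. B.fpos y * gE KE y)"
    unfolding gE_def by (intro integrable_real_mult_indicator B.fpos_int) auto
  have gM_int: "integrable M (gM j)"
  proof -
    have "integrable M (\<lambda>y. B.fpos y * indicator {y \<in> space M. real j < B.fpos y} y)"
      by (intro integrable_real_mult_indicator B.fpos_int) measurable
    moreover have "integrable M (gM j) = integrable M (\<lambda>y. B.fpos y * indicator {y \<in> space M. real j < B.fpos y} y)"
      by (rule Bochner_Integration.integrable_cong) (auto simp: gM_def indicator_def)
    ultimately show ?thesis by simp
  qed
  have tt_int: "integrable M (\<lambda>y. if N < v + KE then B.fpos y else 0)" for N v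
    using B.fpos_int by (cases "N < v + KE") auto
  have hH_int: "integrable M (hH N v)" for N v
    unfolding hH_def using fgE_int gM_int tt_int[of N v] by auto
  have hH_I: "integral\<^sup>L M (hH N v) = \<epsilon>' + integral\<^sup>L M (\<lambda>y. B.fpos y * gE KE y) + integral\<^sup>L M (gM j)
       + (if N < v + KE then If else 0)" for N v
  proof -
    have "integral\<^sup>L M (hH N v) = integral\<^sup>L M (\<lambda>y. \<epsilon>' + B.fpos y * gE KE y + gM j y)
        + integral\<^sup>L M (\<lambda>y. if N < v + KE then B.fpos y else 0)"
      unfolding hH_def using fgE_int gM_int tt_int[of N v]
      by (intro Bochner_Integration.integral_add) auto
    also have "integral\<^sup>L M (\<lambda>y. \<epsilon>' + B.fpos y * gE KE y + gM j y)
        = integral\<^sup>L M (\<lambda>y. \<epsilon>' + B.fpos y * gE KE y) + integral\<^sup>L M (gM j)"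
      using fgE_int gM_int by (intro Bochner_Integration.integral_add) auto
    also have "integral\<^sup>L M (\<lambda>y. \<epsilon>' + B.fpos y * gE KE y) = \<epsilon>' + integral\<^sup>L M (\<lambda>y. B.fpos y * gE KE y)"
      using fgE_int by (subst Bochner_Integration.integral_add) (auto simp: prob_space)
    also have "integral\<^sup>L M (\<lambda>y. if N < v + KE then B.fpos y else 0) = (if N < v + KE then If else 0)"
      by (simp add: If_def)
    finally show ?thesis .
  qed
  have hH_meas[measurable]: "hH N v \<in> borel_measurable M" for N v using hH_int by auto
  have H_eq: "H N v x = hH N v ((T ^^ v) x)" for N v x by (simp add: H_def hH_def)
  have H_int: "integrable M (H N v)" for N v
    unfolding H_eq[abs_def] by (rule integrable_Tn[OF hH_int])
  have H_I: "integral\<^sup>L M (H N v) = integral\<^sup>L M (hH N v)" for N v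
    unfolding H_eq[abs_def] by (rule integral_Tn) simp
  have ind_int: "integrable M (indicator (space M - Gd KG \<epsilon> n) :: 'a \<Rightarrow> real)" for n
    by (intro integrable_real_indicator) (auto simp: emeasure_eq_measure)
  have NL_int: "integrable M (NL N v)" for N v
    unfolding NL_def by (rule integrable_Tn[OF ind_int])
  have NL_I: "integral\<^sup>L M (NL N v) = measure M (space M - Gd KG \<epsilon> (N - v))" for N v
  proof -
    have "integral\<^sup>L M (NL N v) = integral\<^sup>L M (indicator (space M - Gd KG \<epsilon> (N - v)) :: 'a \<Rightarrow> real)"
      unfolding NL_def by (rule integral_Tn) simp
    also have "\<dots> = measure M (space M - Gd KG \<epsilon> (N - v))"
      by (simp add: Int_absorb2 Diff_subset)
    finally show ?thesis .
  qed
  define mu where "mu n = measure M (space M - Gd KG \<epsilon> n)" for n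
  have mu0: "mu 0 = 0" using Gd_0[OF KG(1)] by (simp add: mu_def)
  have mu_nn: "0 \<le> mu n" for n by (simp add: mu_def)
  have main: "(\<Sum>n<N. mu n) \<le> \<rho> * real N + 2 * real KE * If / \<epsilon>" for N
  proof -
    define F where "F x = (\<Sum>v<N. H N v x - \<epsilon>1 * NL N v x)" for x
    have F_int: "integrable M F" unfolding F_def using H_int NL_int by auto
    have "0 \<le> integral\<^sup>L M F"
      by (rule B.cE[OF F_int]) (use B.AE_good pw in \<open>auto simp: F_def\<close>)
    also have "integral\<^sup>L M F = (\<Sum>v<N. integral\<^sup>L M (hH N v)) - \<epsilon>1 * (\<Sum>v<N. mu (N - v))"
    proof -
      have "integral\<^sup>L M F = (\<Sum>v<N. integral\<^sup>L M (\<lambda>x. H N v x - \<epsilon>1 * NL N v x))"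
        unfolding F_def using H_int NL_int by (intro Bochner_Integration.integral_sum) auto
      also have "\<dots> = (\<Sum>v<N. integral\<^sup>L M (hH N v) - \<epsilon>1 * mu (N - v))"
        using H_int NL_int by (intro sum.cong refl) (simp add: H_I NL_I mu_def)
      finally show ?thesis by (simp add: sum_subtractf sum_distrib_left)
    qed
    finally have A1: "\<epsilon>1 * (\<Sum>v<N. mu (N - v)) \<le> (\<Sum>v<N. integral\<^sup>L M (hH N v))" by simp
    have "(\<Sum>v<N. integral\<^sup>L M (hH N v)) = (\<Sum>v<N. \<epsilon>' + integral\<^sup>L M (\<lambda>y. B.fpos y * gE KE y) + integral\<^sup>L M (gM j))
        + (\<Sum>v<N. if N < v + KE then If else 0)"
      by (simp add: hH_I sum.distrib)
    also have "\<dots> \<le> real N * (3 * \<epsilon>') + real KE * If"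
    proof -
      have "(\<Sum>v<N. \<epsilon>' + integral\<^sup>L M (\<lambda>y. B.fpos y * gE KE y) + integral\<^sup>L M (gM j)) \<le> (\<Sum>v<N. 3 * \<epsilon>')"
        using KE(2) j by (intro sum_mono) auto
      moreover have "(\<Sum>v<N. if N < v + KE then If else 0) \<le> real KE * If"
      proof (cases "KE \<le> N")
        case True then show ?thesis using If0 by (intro B.sum_tail_bound) auto
      next
        case False
        have "(\<Sum>v<N. if N < v + KE then If else 0) \<le> (\<Sum>v<N. If)" using If0 by (intro sum_mono) auto
        also have "\<dots> \<le> real KE * If" using False If0 by (simp add: mult_right_mono)
        finally show ?thesis .
      qed
      ultimately show ?thesis by (simp add: mult.commute)
    qed
    finally have A2: "\<epsilon>1 * (\<Sum>n\<in>{1..N}. mu n) \<le> real N * (3 * \<epsilon>') + real KE * If"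
      using A1 sum_rev_shift[of mu N] by simp
    have "(\<Sum>n<N. mu n) \<le> (\<Sum>n\<in>{1..N}. mu n)"
    proof -
      have "(\<Sum>n<N. mu n) = (\<Sum>n\<in>{..<N} - {0}. mu n)"
        using mu0 by (intro sum.mono_neutral_right) auto
      also have "\<dots> \<le> (\<Sum>n\<in>{1..N}. mu n)"
        using mu_nn by (intro sum_mono2) auto
      finally show ?thesis .
    qed
    moreover have "(\<Sum>n\<in>{1..N}. mu n) \<le> (real N * (3 * \<epsilon>') + real KE * If) / \<epsilon>1"
      using A2 eps by (simp add: \<epsilon>1_def field_simps)
    moreover have "(real N * (3 * \<epsilon>') + real KE * If) / \<epsilon>1 = \<rho> * real N / 2 + 2 * real KE * If / \<epsilon>"
      using eps by (simp add: \<epsilon>1_def \<epsilon>'_def field_simps)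
    ultimately have "(\<Sum>n<N. mu n) \<le> \<rho> * real N / 2 + 2 * real KE * If / \<epsilon>" by linarith
    moreover have "\<rho> * real N / 2 \<le> \<rho> * real N" using rho by simp
    ultimately show ?thesis by (smt (verit))
  qed
  show ?thesis using KG(1) main unfolding mu_def by blast
qed
end

context gk begin

lemma diag:
  fixes KG :: "nat \<Rightarrow> nat" and x :: 'a
  assumes KG1: "\<And>j. KG j \<ge> 1"
    and hinf: "\<And>k m. \<exists>n\<ge>m. \<forall>j\<le>k. x \<in> Gd (KG j) (1 / (real j + 1)) n"
    and hgood: "x \<in> B.good"
    and hup: "\<And>\<theta>. \<theta> > 0 \<Longrightarrow> \<exists>m. \<forall>n\<ge>m. b n x \<le> \<theta> * real n"
  shows "\<exists>ni :: nat \<Rightarrow> nat. \<exists>\<delta> :: nat \<Rightarrow> real.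
           filterlim ni at_top sequentially \<and> (\<forall>l. \<delta> l > 0) \<and> \<delta> \<longlonglongrightarrow> 0 \<and>
           (\<forall>i l. l \<le> ni i \<longrightarrow> \<bar>b (ni i) x - b (ni i - l) ((T ^^ l) x)\<bar> \<le> real l * \<delta> l)"
proof -
  define \<epsilon> where "\<epsilon> j = 1 / (real j + 1)" for j :: nat
  define P where "P k m n \<longleftrightarrow> n \<ge> m \<and> (\<forall>j\<le>k. x \<in> Gd (KG j) (\<epsilon> j) n)" for k m n
  have Pex: "\<exists>n. P k m n" for k m
  proof -
    obtain n where n: "n \<ge> m" "\<forall>j\<le>k. x \<in> Gd (KG j) (1 / (real j + 1)) n" using hinf[of m k] by auto
    then have "P k m n" unfolding P_def \<epsilon>_def by simp
    then show ?thesis ..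
  qed
  define ni where "ni = rec_nat (SOME n. P 0 (KG 0) n) (\<lambda>i prev. SOME n. P (Suc i) (max (Suc prev) (KG 0)) n)"
  have ni0: "P 0 (KG 0) (ni 0)" unfolding ni_def using someI_ex[OF Pex] by simp
  have niS: "P (Suc i) (max (Suc (ni i)) (KG 0)) (ni (Suc i))" for i
    unfolding ni_def using someI_ex[OF Pex] by simp
  have ni_mono: "ni i < ni (Suc i)" for i using niS[of i] unfolding P_def by auto
  have smono: "strict_mono ni" by (rule strict_monoI_Suc) (rule ni_mono)
  have ni_good: "\<forall>j\<le>i. x \<in> Gd (KG j) (\<epsilon> j) (ni i)" for i
    using ni0 niS[of "i - 1"] unfolding P_def by (cases i) auto
  have ni_KG: "KG 0 \<le> ni i" for i
    using ni0 niS[of "i - 1"] unfolding P_def by (cases i) auto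
  have ni_ge: "i \<le> ni i" for i using smono by (rule strict_mono_imp_increasing)
  have lim: "filterlim ni at_top sequentially" using smono by (rule filterlim_subseq)
  define err where "err i l = \<bar>b (ni i) x - b (ni i - l) ((T ^^ l) x)\<bar>" for i l
  have xs: "x \<in> space M" using hgood B.good_space by blast
  have upper: "b (ni i) x - b (ni i - l) ((T ^^ l) x) \<le> b l x" if "l \<le> ni i" for i l
    using B.good_sub[OF hgood, of l "ni i - l" 0] that by simp
  have lower: "b (ni i - l) ((T ^^ l) x) - b (ni i) x \<le> \<epsilon> j * real l"
    if "j \<le> i" "KG j \<le> l" "l \<le> ni i" for i j l
  proof -
    have "x \<in> Gd (KG j) (\<epsilon> j) (ni i)" using ni_good[of i] that(1) by blast
    then have "b (ni i - l) ((T ^^ l) x) \<le> b (ni i) x + \<epsilon> j * real l"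
      using that(2,3) unfolding Gd_def by blast
    then show ?thesis by simp
  qed
  have lower0: "b (ni i - l) ((T ^^ l) x) - b (ni i) x \<le> b (KG 0 - l) ((T ^^ l) x) + \<epsilon> 0 * real (KG 0)"
    if "l < KG 0" for i l
  proof -
    have "b ((KG 0 - l) + (ni i - KG 0)) ((T ^^ l) x) \<le> b (KG 0 - l) ((T ^^ l) x) + b (ni i - KG 0) ((T ^^ (KG 0 - l + l)) x)"
      by (rule B.good_sub[OF hgood])
    moreover have "(KG 0 - l) + (ni i - KG 0) = ni i - l" using that ni_KG[of i] by simp
    moreover have "KG 0 - l + l = KG 0" using that by simp
    moreover have "b (ni i - KG 0) ((T ^^ KG 0) x) - b (ni i) x \<le> \<epsilon> 0 * real (KG 0)"
      using lower[of 0 i "KG 0"] ni_KG[of i] by simp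
    ultimately show ?thesis by simp
  qed
  define Bd where "Bd l = \<bar>b l x\<bar> + (if l < KG 0 then \<bar>b (KG 0 - l) ((T ^^ l) x)\<bar> + \<epsilon> 0 * real (KG 0) else \<epsilon> 0 * real l)" for l
  have err_Bd: "err i l \<le> Bd l" if "l \<le> ni i" for i l
  proof -
    have e0: "\<epsilon> 0 \<ge> 0" by (simp add: \<epsilon>_def)
    have "b (ni i - l) ((T ^^ l) x) - b (ni i) x \<le> (if l < KG 0 then \<bar>b (KG 0 - l) ((T ^^ l) x)\<bar> + \<epsilon> 0 * real (KG 0) else \<epsilon> 0 * real l)"
    proof (cases "l < KG 0")
      case True then show ?thesis using lower0[OF True, of i] by simp
    next
      case False then show ?thesis using lower[of 0 i l] that by simp
    qed
    moreover have "0 \<le> (if l < KG 0 then \<bar>b (KG 0 - l) ((T ^^ l) x)\<bar> + \<epsilon> 0 * real (KG 0) else \<epsilon> 0 * real l)"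
      using e0 by simp
    ultimately show ?thesis using upper[OF that] unfolding err_def Bd_def by linarith
  qed
  define I where "I l = {i. l \<le> ni i}" for l
  have I_ne: "I l \<noteq> {}" for l using ni_ge[of l] unfolding I_def by blast
  have I_bdd: "bdd_above ((\<lambda>i. err i l) ` I l)" for l
    unfolding bdd_above_def using err_Bd by (intro exI[of _ "Bd l"]) (auto simp: I_def)
  define S where "S l = (SUP i\<in>I l. err i l)" for l
  have err_S: "err i l \<le> S l" if "l \<le> ni i" for i l
    unfolding S_def using that I_bdd by (intro cSUP_upper) (auto simp: I_def)
  have S_nn: "0 \<le> S l" for l
  proof -
    obtain i where "i \<in> I l" using I_ne by blast
    then show ?thesis using err_S[of l i] by (auto simp: I_def err_def intro: order_trans[OF abs_ge_zero])
  qed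
  define \<delta> where "\<delta> l = (if l = 0 then 1 else 1 / (real l + 1) + S l / real l)" for l
  have \<delta>_pos: "\<delta> l > 0" for l using S_nn[of l] by (simp add: \<delta>_def add_pos_nonneg)
  have bound: "err i l \<le> real l * \<delta> l" if "l \<le> ni i" for i l
  proof (cases "l = 0")
    case True then show ?thesis by (simp add: err_def)
  next
    case False
    have "err i l \<le> S l" by (rule err_S[OF that])
    also have "S l = real l * (S l / real l)" using False by simp
    also have "\<dots> \<le> real l * \<delta> l" using False by (intro mult_left_mono) (auto simp: \<delta>_def)
    finally show ?thesis .
  qed
  have small: "\<exists>L. \<forall>l\<ge>L. S l \<le> \<eta> * real l" if eta: "\<eta> > 0" for \<eta>
  proof -
    obtain j :: nat where j: "1 / (real j + 1) < \<eta>"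
      using eta by (metis nat_approx_posE of_nat_Suc add.commute)
    obtain mu where mu: "\<forall>n\<ge>mu. b n x \<le> \<eta> * real n" using hup[OF eta] by blast
    define L where "L = max (max (KG j) (Suc (ni j))) mu"
    have "S l \<le> \<eta> * real l" if l: "l \<ge> L" for l
      unfolding S_def
    proof (rule cSUP_least[OF I_ne])
      fix i assume i: "i \<in> I l"
      then have lni: "l \<le> ni i" by (simp add: I_def)
      have "ni j < ni i" using l lni unfolding L_def by simp
      then have ji: "j \<le> i" using smono by (metis not_le strict_mono_less_eq order.strict_implies_order)
      have "b (ni i - l) ((T ^^ l) x) - b (ni i) x \<le> \<epsilon> j * real l"
        using lower[OF ji _ lni] l unfolding L_def by simp
      also have "\<dots> \<le> \<eta> * real l" using j by (intro mult_right_mono) (auto simp: \<epsilon>_def)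
      finally have lo: "b (ni i - l) ((T ^^ l) x) - b (ni i) x \<le> \<eta> * real l" .
      have up: "b (ni i) x - b (ni i - l) ((T ^^ l) x) \<le> \<eta> * real l"
        using upper[OF lni] mu l unfolding L_def by fastforce
      show "err i l \<le> \<eta> * real l" using lo up unfolding err_def by linarith
    qed
    then show ?thesis by blast
  qed
  have lim\<delta>: "\<delta> \<longlonglongrightarrow> 0"
  proof (rule LIMSEQ_I)
    fix r :: real assume r: "r > 0"
    obtain L where L: "\<forall>l\<ge>L. S l \<le> r / 3 * real l" using small[of "r/3"] r by auto
    obtain L2 :: nat where L2: "3 / r < real L2" using reals_Archimedean2 by blast
    have "norm (\<delta> l - 0) < r" if l: "l \<ge> max (max L L2) 1" for l
    proof -
      have l0: "l \<noteq> 0" using l by simp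
      have "S l / real l \<le> r / 3" using L l l0 by (simp add: divide_le_eq)
      moreover have "1 / (real l + 1) < r / 3"
      proof -
        have "3 / r < real l + 1" using L2 l by linarith
        then show ?thesis using r by (simp add: field_simps)
      qed
      moreover have "\<delta> l = 1 / (real l + 1) + S l / real l" using l0 by (simp add: \<delta>_def)
      ultimately have "\<delta> l < r" using r by linarith
      then show ?thesis using \<delta>_pos[of l] by simp
    qed
    then show "\<exists>no. \<forall>n\<ge>no. norm (\<delta> n - 0) < r" by blast
  qed
  show ?thesis
    using lim \<delta>_pos lim\<delta> bound unfolding err_def by blast
qed

end

lemma geom_sum_le: "(\<Sum>j\<le>k. (\<rho>::real) / 2 ^ Suc j) \<le> \<rho>" if "\<rho> \<ge> 0"
proof -
  have "(\<Sum>j\<le>k. (1::real) / 2 ^ Suc j) = 1 - 1 / 2 ^ Suc k"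
    by (induction k) (auto simp: field_simps)
  then have "(\<Sum>j\<le>k. (1::real) / 2 ^ Suc j) \<le> 1" by simp
  then have "\<rho> * (\<Sum>j\<le>k. (1::real) / 2 ^ Suc j) \<le> \<rho>" using that by (simp add: mult_left_le)
  then show ?thesis by (simp add: sum_distrib_left)
qed

context gk begin

lemma gk_measure:
  assumes rho: "\<rho> > 0"
  shows "\<exists>KG. (\<forall>j. KG j \<ge> 1) \<and> (\<exists>V\<in>sets M. 1 - 2 * \<rho> \<le> measure M V \<and>
      (\<forall>x\<in>V. \<forall>k m. \<exists>n\<ge>m. \<forall>j\<le>k. x \<in> Gd (KG j) (1 / (real j + 1)) n))"
proof -
  define \<epsilon> where "\<epsilon> j = 1 / (real j + 1)" for j :: nat
  define \<rho>j where "\<rho>j j = \<rho> / 2 ^ Suc j" for j :: nat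
  have "\<forall>j. \<exists>KG. KG \<ge> 1 \<and> (\<exists>C. \<forall>N. (\<Sum>n<N. measure M (space M - Gd KG (\<epsilon> j) n)) \<le> \<rho>j j * real N + C)"
  proof
    fix j
    show "\<exists>KG. KG \<ge> 1 \<and> (\<exists>C. \<forall>N. (\<Sum>n<N. measure M (space M - Gd KG (\<epsilon> j) n)) \<le> \<rho>j j * real N + C)"
      using gk_core[of "\<epsilon> j" "\<rho>j j"] rho by (auto simp: \<epsilon>_def \<rho>j_def)
  qed
  then obtain KG where KG: "\<forall>j. KG j \<ge> 1 \<and> (\<exists>C. \<forall>N. (\<Sum>n<N. measure M (space M - Gd (KG j) (\<epsilon> j) n)) \<le> \<rho>j j * real N + C)"
    by metis
  then obtain C where C: "\<forall>j. \<forall>N. (\<Sum>n<N. measure M (space M - Gd (KG j) (\<epsilon> j) n)) \<le> \<rho>j j * real N + C j"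
    by metis
  define Ak where "Ak k n = (\<Inter>j\<in>{..k}. Gd (KG j) (\<epsilon> j) n)" for k n
  have Ak_sets[measurable]: "Ak k n \<in> sets M" for k n
    unfolding Ak_def by (intro sets.finite_INT) auto
  have Ak_sp: "Ak k n \<subseteq> space M" for k n unfolding Ak_def Gd_def by auto
  have mAk: "measure M (space M - Ak k n) \<le> (\<Sum>j\<le>k. measure M (space M - Gd (KG j) (\<epsilon> j) n))" for k n
  proof -
    have eq: "space M - Ak k n = (\<Union>j\<in>{..k}. space M - Gd (KG j) (\<epsilon> j) n)" unfolding Ak_def by auto
    show ?thesis unfolding eq by (rule finite_measure_subadditive_finite) auto
  qed
  have sumAk: "(\<Sum>n<N. measure M (space M - Ak k n)) \<le> \<rho> * real N + (\<Sum>j\<le>k. C j)" for k N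
  proof -
    have "(\<Sum>n<N. measure M (space M - Ak k n)) \<le> (\<Sum>n<N. \<Sum>j\<le>k. measure M (space M - Gd (KG j) (\<epsilon> j) n))"
      by (intro sum_mono mAk)
    also have "\<dots> = (\<Sum>j\<le>k. \<Sum>n<N. measure M (space M - Gd (KG j) (\<epsilon> j) n))" by (rule sum.swap)
    also have "\<dots> \<le> (\<Sum>j\<le>k. \<rho>j j * real N + C j)" using C by (intro sum_mono) auto
    also have "\<dots> = (\<Sum>j\<le>k. \<rho>j j) * real N + (\<Sum>j\<le>k. C j)" by (simp add: sum.distrib sum_distrib_right)
    also have "(\<Sum>j\<le>k. \<rho>j j) * real N \<le> \<rho> * real N"
      using geom_sum_le[of \<rho> k] rho by (intro mult_right_mono) (auto simp: \<rho>j_def)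
    finally show ?thesis by simp
  qed
  have io: "\<exists>n\<ge>m. 1 - 2 * \<rho> \<le> measure M (Ak k n)" for k m
  proof (rule ccontr)
    assume neg: "\<not> (\<exists>n\<ge>m. 1 - 2 * \<rho> \<le> measure M (Ak k n))"
    have gt0: "\<forall>n\<ge>m. measure M (Ak k n) < 1 - 2 * \<rho>"
    proof (intro allI impI)
      fix n assume "n \<ge> m"
      then have "\<not> 1 - 2 * \<rho> \<le> measure M (Ak k n)" using neg by blast
      then show "measure M (Ak k n) < 1 - 2 * \<rho>" by simp
    qed
    have gt: "\<forall>n\<ge>m. measure M (space M - Ak k n) > 2 * \<rho>"
    proof (intro allI impI)
      fix n assume "n \<ge> m"
      then show "measure M (space M - Ak k n) > 2 * \<rho>" using gt0 prob_compl[OF Ak_sets[of k n]] by force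
    qed
    define Ck where "Ck = (\<Sum>j\<le>k. C j)"
    define N where "N = 2 * m + nat \<lceil>Ck / \<rho>\<rceil> + 1"
    have "(\<Sum>n\<in>{m..<N}. 2 * \<rho>) \<le> (\<Sum>n\<in>{m..<N}. measure M (space M - Ak k n))"
      using gt by (intro sum_mono) (auto intro: less_imp_le)
    also have "\<dots> \<le> (\<Sum>n<N. measure M (space M - Ak k n))"
      by (intro sum_mono2) auto
    also have "\<dots> \<le> \<rho> * real N + Ck" unfolding Ck_def by (rule sumAk)
    finally have "real (N - m) * (2 * \<rho>) \<le> \<rho> * real N + Ck" by simp
    moreover have "real (N - m) = real N - real m" unfolding N_def by simp
    moreover have "Ck / \<rho> \<le> real (nat \<lceil>Ck / \<rho>\<rceil>)" by linarith
    then have "Ck < \<rho> * (real (nat \<lceil>Ck / \<rho>\<rceil>) + 1)" using rho by (simp add: field_simps)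
    ultimately show False unfolding N_def using rho by (simp add: algebra_simps)
  qed
  define U where "U k m = (\<Union>n\<in>{m..}. Ak k n)" for k m
  have U_sets[measurable]: "U k m \<in> sets M" for k m unfolding U_def by (intro sets.countable_UN') auto
  have U_ge: "1 - 2 * \<rho> \<le> measure M (U k m)" for k m
  proof -
    obtain n where n: "n \<ge> m" "1 - 2 * \<rho> \<le> measure M (Ak k n)" using io by blast
    have "measure M (Ak k n) \<le> measure M (U k m)"
      using n by (intro finite_measure_mono) (auto simp: U_def)
    then show ?thesis using n by simp
  qed
  define W where "W k = (\<Inter>m. U k m)" for k
  have W_sets[measurable]: "W k \<in> sets M" for k unfolding W_def by auto
  have W_ge: "1 - 2 * \<rho> \<le> measure M (W k)" for k
  proof -
    have "decseq (U k)" by (intro decseq_SucI) (auto simp: U_def intro: Suc_leD)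
    then have "(\<lambda>m. measure M (U k m)) \<longlonglongrightarrow> measure M (\<Inter>m. U k m)"
      by (intro finite_Lim_measure_decseq) auto
    then show ?thesis unfolding W_def by (rule LIMSEQ_le_const) (use U_ge in auto)
  qed
  define V where "V = (\<Inter>k. W k)"
  have V_sets: "V \<in> sets M" unfolding V_def by auto
  have V_ge: "1 - 2 * \<rho> \<le> measure M V"
  proof -
    have AkS: "Ak (Suc k) n \<subseteq> Ak k n" for k n unfolding Ak_def by auto
    have "decseq W" by (intro decseq_SucI) (auto simp: W_def U_def dest!: AkS[THEN subsetD])
    then have "(\<lambda>k. measure M (W k)) \<longlonglongrightarrow> measure M (\<Inter>k. W k)"
      by (intro finite_Lim_measure_decseq) auto
    then show ?thesis unfolding V_def by (rule LIMSEQ_le_const) (use W_ge in auto)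
  qed
  have V_prop: "\<forall>k m. \<exists>n\<ge>m. \<forall>j\<le>k. x \<in> Gd (KG j) (1 / (real j + 1)) n" if "x \<in> V" for x
  proof (intro allI)
    fix k m
    have "x \<in> U k m" using that unfolding V_def W_def by blast
    then obtain n where "n \<ge> m" "x \<in> Ak k n" unfolding U_def by auto
    then show "\<exists>n\<ge>m. \<forall>j\<le>k. x \<in> Gd (KG j) (1 / (real j + 1)) n"
      unfolding Ak_def \<epsilon>_def by auto
  qed
  show ?thesis using KG V_sets V_ge V_prop by blast
qed

end

context gk begin

theorem gk_main:
  "AE \<omega> in M. \<exists>ni :: nat \<Rightarrow> nat. \<exists>\<delta> :: nat \<Rightarrow> real.
     filterlim ni at_top sequentially \<and> (\<forall>l. \<delta> l > 0) \<and> \<delta> \<longlonglongrightarrow> 0 \<and>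
     (\<forall>i l. l \<le> ni i \<longrightarrow>
        \<bar>a (ni i) \<omega> - a (ni i - l) ((T ^^ l) \<omega>) - A * real l\<bar> \<le> real l * \<delta> l)"
proof -
  have "\<forall>p::nat. \<exists>KG. (\<forall>j. KG j \<ge> 1) \<and> (\<exists>V\<in>sets M. 1 - 2 * (1 / (2 * (real p + 1))) \<le> measure M V \<and>
      (\<forall>x\<in>V. \<forall>k m. \<exists>n\<ge>m. \<forall>j\<le>k. x \<in> Gd (KG j) (1 / (real j + 1)) n))"
    by (intro allI gk_measure) simp
  then obtain KGf where KGf: "\<forall>p. (\<forall>j. KGf p j \<ge> 1) \<and> (\<exists>V\<in>sets M. 1 - 2 * (1 / (2 * (real p + 1))) \<le> measure M V \<and>
      (\<forall>x\<in>V. \<forall>k m. \<exists>n\<ge>m. \<forall>j\<le>k. x \<in> Gd (KGf p j) (1 / (real j + 1)) n))"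
    by metis
  then obtain Vf where Vf: "\<forall>p. Vf p \<in> sets M \<and> 1 - 2 * (1 / (2 * (real p + 1))) \<le> measure M (Vf p) \<and>
      (\<forall>x\<in>Vf p. \<forall>k m. \<exists>n\<ge>m. \<forall>j\<le>k. x \<in> Gd (KGf p j) (1 / (real j + 1)) n)"
    by metis
  define Z where "Z = (\<Union>p. Vf p)"
  have Z_sets: "Z \<in> sets M" unfolding Z_def using Vf by auto
  have "measure M Z = 1"
  proof (rule ccontr)
    assume "measure M Z \<noteq> 1"
    note ne = this
    have le1: "measure M Z \<le> 1" by (rule prob_le_1)
    have lt: "measure M Z < 1" using le1 ne by (rule le_neq_trans)
    then obtain p :: nat where p: "1 / (real p + 1) < 1 - measure M Z"
      by (metis diff_gt_0_iff_gt nat_approx_posE of_nat_Suc add.commute)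
    have "measure M (Vf p) \<le> measure M Z"
      using Vf Z_sets unfolding Z_def by (intro finite_measure_mono) auto
    moreover have "1 - 2 * (1 / (2 * (real p + 1))) = 1 - 1 / (real p + 1)" by (simp add: field_simps)
    ultimately have "1 - 1 / (real p + 1) \<le> measure M Z" using Vf by (metis order_trans)
    then show False using p by linarith
  qed
  then have AEZ: "AE x in M. x \<in> Z" using Z_sets by (intro AE_prob_1) auto
  show ?thesis using AEZ B.AE_good b_limsup
  proof eventually_elim
    case (elim x)
    then obtain p where xp: "x \<in> Vf p" unfolding Z_def by blast
    have hup: "\<exists>m. \<forall>n\<ge>m. b n x \<le> \<theta> * real n" if "\<theta> > 0" for \<theta>
      using elim(3) that by blast
    have "\<exists>ni :: nat \<Rightarrow> nat. \<exists>\<delta> :: nat \<Rightarrow> real.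
           filterlim ni at_top sequentially \<and> (\<forall>l. \<delta> l > 0) \<and> \<delta> \<longlonglongrightarrow> 0 \<and>
           (\<forall>i l. l \<le> ni i \<longrightarrow> \<bar>b (ni i) x - b (ni i - l) ((T ^^ l) x)\<bar> \<le> real l * \<delta> l)"
    proof (rule diag[of "KGf p" x])
      show "1 \<le> KGf p j" for j using KGf by blast
      show "\<exists>n\<ge>m. \<forall>j\<le>k. x \<in> Gd (KGf p j) (1 / (real j + 1)) n" for k m
        using Vf xp by blast
      show "x \<in> B.good" by (rule elim(2))
      show "\<exists>m. \<forall>n\<ge>m. b n x \<le> \<theta> * real n" if "\<theta> > 0" for \<theta> using hup[OF that] .
    qed
    then obtain ni \<delta> where nd: "filterlim ni at_top sequentially" "\<forall>l. \<delta> l > 0" "\<delta> \<longlonglongrightarrow> 0"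
      "\<forall>i l. l \<le> ni i \<longrightarrow> \<bar>b (ni i) x - b (ni i - l) ((T ^^ l) x)\<bar> \<le> real l * \<delta> l" by blast
    have "\<bar>a (ni i) x - a (ni i - l) ((T ^^ l) x) - A * real l\<bar> \<le> real l * \<delta> l" if "l \<le> ni i" for i l
    proof -
      have "b (ni i) x - b (ni i - l) ((T ^^ l) x) = a (ni i) x - a (ni i - l) ((T ^^ l) x) - A * real l"
        using that by (simp add: b_def of_nat_diff algebra_simps)
      then show ?thesis using nd(4)[rule_format, OF that] by simp
    qed
    then show ?case using nd by blast
  qed
qed

end

theorem theorem1p1:
  fixes M :: "'a measure" and T :: "'a \<Rightarrow> 'a" and a :: "nat \<Rightarrow> 'a \<Rightarrow> real" and A :: real
  assumes "prob_space M"
    and "ergodic_mpt M T"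
    and "\<And>n. a n \<in> borel_measurable M"
    and "\<And>\<omega>. \<omega> \<in> space M \<Longrightarrow> a 0 \<omega> = 0"
    and "\<And>n m. n > 0 \<Longrightarrow> m > 0 \<Longrightarrow>
           AE \<omega> in M. a (n + m) \<omega> \<le> a n \<omega> + a m ((T ^^ n) \<omega>)"
    and "integrable M (a 1)"
    and "(INF n\<in>{1::nat..}. ext_integral M (a n) / ereal (real n)) = ereal A"
  shows "AE \<omega> in M. \<exists>ni :: nat \<Rightarrow> nat. \<exists>\<delta> :: nat \<Rightarrow> real.
           filterlim ni at_top sequentially \<and> (\<forall>l. \<delta> l > 0) \<and> \<delta> \<longlonglongrightarrow> 0 \<and>
           (\<forall>i l. l \<le> ni i \<longrightarrow>
              \<bar>a (ni i) \<omega> - a (ni i - l) ((T ^^ l) \<omega>) - A * real l\<bar> \<le> real l * \<delta> l)"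
proof -
  interpret G: gk M T a A
  proof -
    interpret prob_space M by (rule assms(1))
    show "gk M T a A"
      by (unfold_locales) (use assms in auto)
  qed
  show ?thesis by (rule G.gk_main)
qed


end
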